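(* Let $\mathbf a=(a_1,\dots,a_k)$ be a sequence of nonnegative integers with $\sum_i a_i=n$. Then for every $\lambda\in\mathbb C$, \[ \left|\Phi_{\mathbf a}^{-1}(D(\mathbf a))\right|=\sum_{\mathbf 0\le \mathbf b\le \mathbf a}(-1)^{\sum_j b_j}\, f_\lambda\Big(n-\sum_j b_j\Big)\prod_{i=1}^k\binom{a_i}{b_i} f_\lambda(b_i), \] where the sum is over all integer vectors $\mathbf b=(b_1,\dots,b_k)$ with $0\le b_i\le a_i$ for all $i$.
   Context: For $\mathbf a=(a_1,\dots,a_k)$ with nonnegative integer entries summing to $n$, put $c_0=0$, $c_j=a_1+\dots+a_j$, and let the $j$-th block be $A_j=\{c_{j-1}+1,\dots,c_j\}$. Let $S_{\mathbf a}\subseteq S_n$ be the set of permutations $\pi$ of $[n]$ with $\pi_i>\pi_{i+1}$ whenever $i,i+1$ lie in the same block. $D(\mathbf a)$ is the set of derangements (permutations with no $i$ such that $\pi_i=i$) in $S_{\mathbf a}$. The map $\Phi_{\mathbf a}:S_n\to S_{\mathbf a}$ sorts the entries in each block into decreasing order (keeping the set of entries in each block); so $\Phi_{\mathbf a}^{-1}(D(\mathbf a))$ is the set of permutations of $[n]$ which become derangements after this sorting. For $\lambda\in\mathbb C$ and $m\ge 0$, $f_\lambda(m)=\sum_{\pi\in S_m}\lambda^{\mathrm{fix}(\pi)}$, where $\mathrm{fix}(\pi)$ is the number of fixed points of $\pi$ (so $f_\lambda(0)=1$, $f_1(m)=m!$, and $f_0(m)$ is the number of derangements of $[m]$). *)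

theory Defs
  imports Complex_Main "HOL-Combinatorics.Permutations"
begin

text \<open>Compositions a are nat lists (a_1,...,a_k); blocks are 0-indexed here:
  block j (j < length a) is {c_j + 1 .. c_(j+1)} with c_j = a_1 + ... + a_j.\<close>

definition blk :: "nat list \<Rightarrow> nat \<Rightarrow> nat set" where
  "blk a j = {sum_list (take j a) + 1 .. sum_list (take (Suc j) a)}"

definition S_a :: "nat list \<Rightarrow> (nat \<Rightarrow> nat) set" where
  "S_a a = {p. p permutes {1..sum_list a} \<and>
     (\<forall>i. (\<exists>j<length a. i \<in> blk a j \<and> Suc i \<in> blk a j) \<longrightarrow> p i > p (Suc i))}"

definition derangement_on :: "nat \<Rightarrow> (nat \<Rightarrow> nat) \<Rightarrow> bool" where
  "derangement_on n p \<longleftrightarrow> (\<forall>i\<in>{1..n}. p i \<noteq> i)"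

definition D_a :: "nat list \<Rightarrow> (nat \<Rightarrow> nat) set" where
  "D_a a = {p \<in> S_a a. derangement_on (sum_list a) p}"

text \<open>Phi_a: sort the entries of each block into decreasing order.
  Position c_j + t (1 \<le> t \<le> a_(j+1)) receives the t-th largest element of p ` (block j).\<close>
definition Phi :: "nat list \<Rightarrow> (nat \<Rightarrow> nat) \<Rightarrow> (nat \<Rightarrow> nat)" where
  "Phi a p i = (if \<exists>j<length a. i \<in> blk a j
     then (let j = (THE j. j < length a \<and> i \<in> blk a j)
           in rev (sorted_list_of_set (p ` blk a j)) ! (i - sum_list (take j a) - 1))
     else i)"

definition f_lam :: "complex \<Rightarrow> nat \<Rightarrow> complex" where
  "f_lam lam m = (\<Sum>p\<in>{p. p permutes {1..m}}. lam ^ card {i\<in>{1..m}. p i = i})"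

end

theory Submission
  imports Defs
begin


definition cc :: "nat list \<Rightarrow> nat \<Rightarrow> nat" where "cc a j = sum_list (take j a)"

lemma blk_def': "blk a j = {cc a j + 1 .. cc a (Suc j)}"
  by (simp add: blk_def cc_def)

lemma cc_Suc: "j < length a \<Longrightarrow> cc a (Suc j) = cc a j + a!j"
  by (simp add: cc_def take_Suc_conv_app_nth)

lemma cc_0[simp]: "cc a 0 = 0" by (simp add: cc_def)

lemma cc_mono: assumes "j \<le> j'" shows "cc a j \<le> cc a j'"
proof -
  have "take j' a = take j a @ drop j (take j' a)"
    using assms by (metis append_take_drop_id min.absorb1 take_take)
  then have "sum_list (take j' a) = sum_list (take j a) + sum_list (drop j (take j' a))"
    by (metis sum_list_append)
  then show ?thesis by (simp add: cc_def)
qed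

lemma cc_ge: "length a \<le> j \<Longrightarrow> cc a j = sum_list a"
  by (simp add: cc_def)

lemma blk_disj: assumes "j < j'" "x \<in> blk a j" shows "x \<notin> blk a j'"
proof -
  have "cc a (Suc j) \<le> cc a j'" using assms(1) by (simp add: cc_mono)
  then show ?thesis using assms(2) by (auto simp: blk_def')
qed

lemma blk_unique: "x \<in> blk a j \<Longrightarrow> x \<in> blk a j' \<Longrightarrow> j = j'"
  by (metis blk_disj linorder_neqE_nat)

lemma blk_sub: "j < length a \<Longrightarrow> blk a j \<subseteq> {1..sum_list a}"
proof -
  assume "j < length a"
  have "cc a (Suc j) \<le> cc a (length a)" using \<open>j < length a\<close> by (simp add: cc_mono)
  then show ?thesis by (auto simp: blk_def' cc_ge)
qed

lemma card_blk: "j < length a \<Longrightarrow> card (blk a j) = a!j"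
  by (simp add: blk_def' cc_Suc)

lemma blk_Cons0: "blk (y#a) 0 = {1..y}" by (simp add: blk_def)
lemma blk_ConsS: "blk (y#a) (Suc j) = {y + cc a j + 1 .. y + cc a (Suc j)}"
  by (simp add: blk_def cc_def)

lemma cc_Cons_Suc[simp]: "cc (y#a) (Suc j) = y + cc a j" by (simp add: cc_def)

lemma blk_cover: "x \<in> {1..sum_list a} \<Longrightarrow> \<exists>j<length a. x \<in> blk a j"
proof (induction a arbitrary: x)
  case Nil then show ?case by simp
next
  case (Cons y a)
  show ?case
  proof (cases "x \<le> y")
    case True then show ?thesis using Cons.prems by (intro exI[of _ 0]) (auto simp: blk_Cons0)
  next
    case False
    then have "x - y \<in> {1..sum_list a}" using Cons.prems by auto
    then obtain j where "j < length a" "x - y \<in> blk a j" using Cons.IH by blast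
    then show ?thesis using False by (intro exI[of _ "Suc j"]) (auto simp: blk_ConsS blk_def')
  qed
qed

definition cnt :: "nat set \<Rightarrow> nat \<Rightarrow> nat" where "cnt V y = card {z\<in>V. y < z}"

lemma sorted_nth_iff: fixes xs :: "nat list" assumes "sorted_wrt (<) xs" "i < length xs" "j < length xs"
  shows "xs!i < xs!j \<longleftrightarrow> i < j"
proof (cases i j rule: linorder_cases)
  case less then show ?thesis using assms sorted_wrt_nth_less[OF assms(1) less assms(3)] by simp
next
  case equal then show ?thesis by simp
next
  case greater then show ?thesis using assms sorted_wrt_nth_less[OF assms(1) greater assms(2)] by simp
qed

lemma cnt_nth: assumes "finite V" "s < card V"
  shows "cnt V (sorted_list_of_set V ! s) = card V - Suc s"
proof -
  let ?xs = "sorted_list_of_set V"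
  have st: "sorted_wrt (<) ?xs" by (rule strict_sorted_list_of_set)
  have len: "length ?xs = card V" by simp
  have d: "distinct ?xs" by simp
  have "{z\<in>V. ?xs!s < z} = (\<lambda>r. ?xs!r) ` {s<..<card V}"
  proof
    show "{z\<in>V. ?xs!s < z} \<subseteq> (\<lambda>r. ?xs!r) ` {s<..<card V}"
    proof
      fix z assume "z \<in> {z\<in>V. ?xs!s < z}"
      then have "z \<in> set ?xs" "?xs!s < z" using assms by auto
      then obtain r where "r < card V" "z = ?xs!r" by (metis in_set_conv_nth len)
      then show "z \<in> (\<lambda>r. ?xs!r) ` {s<..<card V}"
        using sorted_nth_iff[OF st] assms \<open>?xs!s < z\<close> by auto
    qed
  next
    show "(\<lambda>r. ?xs!r) ` {s<..<card V} \<subseteq> {z\<in>V. ?xs!s < z}"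
    proof
      fix z assume "z \<in> (\<lambda>r. ?xs!r) ` {s<..<card V}"
      then obtain r where "s < r" "r < card V" "z = ?xs!r" by auto
      then show "z \<in> {z\<in>V. ?xs!s < z}"
        using sorted_nth_iff[OF st] assms nth_mem[of r ?xs] by auto
    qed
  qed
  moreover have "inj_on (\<lambda>r. ?xs!r) {s<..<card V}"
    using d by (auto simp: inj_on_def nth_eq_iff_index_eq)
  ultimately have "cnt V (?xs!s) = card {s<..<card V}" unfolding cnt_def by (simp add: card_image)
  then show ?thesis by simp
qed

lemma rev_sorted_iff: assumes "finite V" "t < card V"
  shows "rev (sorted_list_of_set V) ! t = y \<longleftrightarrow> (y \<in> V \<and> cnt V y = t)"
proof -
  let ?xs = "sorted_list_of_set V"
  have r: "rev ?xs ! t = ?xs ! (card V - Suc t)" using assms by (simp add: rev_nth)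
  show ?thesis
  proof
    assume "rev ?xs ! t = y"
    have i: "card V - Suc t < card V" using assms by simp
    have "cnt V y = card V - Suc (card V - Suc t)" using cnt_nth[OF assms(1) i] r \<open>rev ?xs ! t = y\<close> by simp
    also have "\<dots> = t" using assms by simp
    finally have "cnt V y = t" .
    moreover have "?xs ! (card V - Suc t) \<in> set ?xs" using i by (intro nth_mem) simp
    ultimately show "y \<in> V \<and> cnt V y = t" using r \<open>rev ?xs ! t = y\<close> assms by simp
  next
    assume h: "y \<in> V \<and> cnt V y = t"
    have "y \<in> set ?xs" using h assms by simp
    then obtain s where s0: "s < length ?xs" "?xs!s = y" by (auto simp: in_set_conv_nth)
    then have s: "s < card V" "y = ?xs!s" by auto
    then have "card V - Suc s = t" using cnt_nth[OF assms(1) s(1)] h by simp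
    then have "s = card V - Suc t" using s(1) by linarith
    then show "rev ?xs ! t = y" using r s by simp
  qed
qed

lemma cnt_le: "finite V \<Longrightarrow> y \<in> V \<Longrightarrow> cnt V y < card V"
  unfolding cnt_def by (rule psubset_card_mono) auto

lemma cnt_anti: "finite V \<Longrightarrow> y \<le> z \<Longrightarrow> cnt V z \<le> cnt V y"
  unfolding cnt_def by (rule card_mono) auto

lemma cnt_strict: "finite V \<Longrightarrow> z \<in> V \<Longrightarrow> y < z \<Longrightarrow> cnt V z < cnt V y"
  unfolding cnt_def by (rule psubset_card_mono) auto



definition isbad :: "nat \<Rightarrow> nat set \<Rightarrow> nat \<Rightarrow> bool" where
  "isbad c V y \<longleftrightarrow> y \<in> V \<and> y = c + 1 + cnt V y"

definition badb :: "nat list \<Rightarrow> (nat \<Rightarrow> nat) \<Rightarrow> nat \<Rightarrow> bool" where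
  "badb a p j \<longleftrightarrow> (\<exists>y. isbad (cc a j) (p ` blk a j) y)"

lemma finite_blk[simp]: "finite (blk a j)" by (simp add: blk_def')

lemma card_pblk: assumes "p permutes {1..sum_list a}" "j < length a"
  shows "card (p ` blk a j) = a!j"
proof -
  have "inj p" using assms(1) by (simp add: permutes_inj)
  then show ?thesis using card_blk[OF assms(2)] by (simp add: card_image inj_on_subset)
qed

lemma Phi_blk: assumes "j < length a" "x \<in> blk a j"
  shows "Phi a p x = rev (sorted_list_of_set (p ` blk a j)) ! (x - cc a j - 1)"
proof -
  have "(THE j. j < length a \<and> x \<in> blk a j) = j"
    using assms blk_unique by (intro the_equality) auto
  then show ?thesis using assms unfolding Phi_def by (auto simp: cc_def Let_def)
qed

lemma Phi_out: assumes "x \<notin> {1..sum_list a}" shows "Phi a p x = x"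
proof -
  have "\<not> (\<exists>j<length a. x \<in> blk a j)" using assms blk_sub by blast
  then show ?thesis unfolding Phi_def by (simp only: if_False)
qed

lemma Phi_char: assumes "p permutes {1..sum_list a}" "j < length a" "x \<in> blk a j"
  shows "Phi a p x = y \<longleftrightarrow> (y \<in> p ` blk a j \<and> cnt (p ` blk a j) y = x - cc a j - 1)"
proof -
  have t: "x - cc a j - 1 < card (p ` blk a j)"
    using assms card_pblk[OF assms(1,2)] by (auto simp: blk_def' cc_Suc)
  show ?thesis unfolding Phi_blk[OF assms(2,3)] by (rule rev_sorted_iff[OF _ t]) simp
qed

lemma Phi_in: assumes "p permutes {1..sum_list a}" "j < length a" "x \<in> blk a j"
  shows "Phi a p x \<in> p ` blk a j" "cnt (p ` blk a j) (Phi a p x) = x - cc a j - 1"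
  using Phi_char[OF assms, of "Phi a p x"] by auto

lemma pblk_disj: assumes "p permutes {1..sum_list a}" "y \<in> p ` blk a j" "y \<in> p ` blk a j'"
  shows "j = j'"
proof -
  have "inj p" using assms(1) by (simp add: permutes_inj)
  then show ?thesis using assms(2,3) blk_unique by (auto dest: injD)
qed

lemma Phi_perm: assumes "p permutes {1..sum_list a}" shows "Phi a p permutes {1..sum_list a}"
proof (rule bij_imp_permutes)
  let ?S = "{1..sum_list a}"
  have sub: "Phi a p ` ?S \<subseteq> ?S"
  proof
    fix y assume "y \<in> Phi a p ` ?S"
    then obtain x where x: "x \<in> ?S" "y = Phi a p x" by auto
    then obtain j where j: "j < length a" "x \<in> blk a j" using blk_cover by blast
    have "y \<in> p ` blk a j" using Phi_in[OF assms j] x by simp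
    then show "y \<in> ?S" using blk_sub[OF j(1)] permutes_image[OF assms] by blast
  qed
  have inj: "inj_on (Phi a p) ?S"
  proof
    fix x1 x2 assume h: "x1 \<in> ?S" "x2 \<in> ?S" "Phi a p x1 = Phi a p x2"
    obtain j1 where j1: "j1 < length a" "x1 \<in> blk a j1" using blk_cover h by blast
    obtain j2 where j2: "j2 < length a" "x2 \<in> blk a j2" using blk_cover h by blast
    have "j1 = j2" using Phi_in[OF assms j1] Phi_in[OF assms j2] h(3) pblk_disj[OF assms] by metis
    then have "x1 - cc a j1 - 1 = x2 - cc a j1 - 1" using Phi_in[OF assms j1] Phi_in[OF assms j2] h(3) by metis
    then show "x1 = x2" using j1 j2 \<open>j1 = j2\<close> by (auto simp: blk_def')
  qed
  have "Phi a p ` ?S = ?S" using endo_inj_surj[OF _ sub inj] by simp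
  then show "bij_betw (Phi a p) ?S ?S" using inj by (simp add: bij_betw_def)
next
  fix x assume "x \<notin> {1..sum_list a}" then show "Phi a p x = x" by (rule Phi_out)
qed

lemma Phi_S: assumes "p permutes {1..sum_list a}" shows "Phi a p \<in> S_a a"
  unfolding S_a_def
proof (intro CollectI conjI allI impI)
  show "Phi a p permutes {1..sum_list a}" by (rule Phi_perm[OF assms])
next
  fix i assume "\<exists>j<length a. i \<in> blk a j \<and> Suc i \<in> blk a j"
  then obtain j where j: "j < length a" "i \<in> blk a j" "Suc i \<in> blk a j" by blast
  have c1: "cnt (p ` blk a j) (Phi a p i) = i - cc a j - 1" using Phi_in[OF assms j(1,2)] by simp
  have c2: "cnt (p ` blk a j) (Phi a p (Suc i)) = Suc i - cc a j - 1" using Phi_in[OF assms j(1,3)] by simp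
  have lt: "i - cc a j - 1 < Suc i - cc a j - 1" using j by (auto simp: blk_def')
  show "Phi a p (Suc i) < Phi a p i"
  proof (rule ccontr)
    assume "\<not> Phi a p (Suc i) < Phi a p i"
    then have "cnt (p ` blk a j) (Phi a p (Suc i)) \<le> cnt (p ` blk a j) (Phi a p i)"
      by (intro cnt_anti) auto
    then show False using c1 c2 lt by simp
  qed
qed

lemma Phi_der: assumes "p permutes {1..sum_list a}"
  shows "derangement_on (sum_list a) (Phi a p) \<longleftrightarrow> (\<forall>j<length a. \<not> badb a p j)"
proof
  assume d: "derangement_on (sum_list a) (Phi a p)"
  show "\<forall>j<length a. \<not> badb a p j"
  proof (intro allI impI notI)
    fix j assume j: "j < length a" "badb a p j"
    then obtain y where y: "y \<in> p ` blk a j" "y = cc a j + 1 + cnt (p ` blk a j) y"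
      by (auto simp: badb_def isbad_def)
    have "cnt (p ` blk a j) y < a!j" using cnt_le[of "p ` blk a j" y] y card_pblk[OF assms j(1)] by simp
    then have yb: "y \<in> blk a j" using y j by (auto simp: blk_def' cc_Suc)
    have "Phi a p y = y" using Phi_char[OF assms j(1) yb] y by simp
    moreover have "y \<in> {1..sum_list a}" using yb blk_sub[OF j(1)] by blast
    ultimately show False using d by (auto simp: derangement_on_def)
  qed
next
  assume h: "\<forall>j<length a. \<not> badb a p j"
  show "derangement_on (sum_list a) (Phi a p)" unfolding derangement_on_def
  proof (intro ballI notI)
    fix x assume x: "x \<in> {1..sum_list a}" "Phi a p x = x"
    obtain j where j: "j < length a" "x \<in> blk a j" using blk_cover x by blast
    have "x \<in> p ` blk a j \<and> cnt (p ` blk a j) x = x - cc a j - 1"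
      using iffD1[OF Phi_char[OF assms j, of x] x(2)] .
    then have "isbad (cc a j) (p ` blk a j) x" using j by (auto simp: isbad_def blk_def')
    then show False using h j by (auto simp: badb_def)
  qed
qed

lemma LHS_eq: "{p. p permutes {1..sum_list a} \<and> Phi a p \<in> D_a a} =
  {p. p permutes {1..sum_list a} \<and> (\<forall>j<length a. \<not> badb a p j)}"
  using Phi_S Phi_der unfolding D_a_def by blast



definition sh :: "nat \<Rightarrow> nat \<Rightarrow> nat" where "sh f v = (if v < f then v else v - 1)"
definition ush :: "nat \<Rightarrow> nat \<Rightarrow> nat" where "ush f v = (if v < f then v else Suc v)"

lemma sh_ush[simp]: "sh f (ush f v) = v" by (simp add: sh_def ush_def)
lemma ush_sh: "v \<noteq> f \<Longrightarrow> ush f (sh f v) = v" by (cases "v < f") (auto simp: sh_def ush_def)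
lemma ush_neq[simp]: "ush f v \<noteq> f" by (simp add: ush_def)
lemma ush_neq2[simp]: "f \<noteq> ush f v" by (simp add: ush_def)
lemma sh_less_iff: "y \<noteq> f \<Longrightarrow> z \<noteq> f \<Longrightarrow> sh f y < sh f z \<longleftrightarrow> y < z" by (auto simp: sh_def)
lemma sh_eq_iff: "y \<noteq> f \<Longrightarrow> z \<noteq> f \<Longrightarrow> sh f y = sh f z \<longleftrightarrow> y = z" by (auto simp: sh_def)
lemma ush_less_iff: "ush f y < ush f z \<longleftrightarrow> y < z" by (auto simp: ush_def)
lemma ush_eq_iff: "ush f y = ush f z \<longleftrightarrow> y = z" by (auto simp: ush_def)
lemma inj_ush: "inj (ush f)" by (simp add: inj_def ush_eq_iff)

lemma cc_upd: assumes "i < length a" "1 \<le> a!i"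
  shows "cc (a[i := a!i - 1]) j = (if j \<le> i then cc a j else cc a j - 1)"
proof (cases "j \<le> i")
  case True then show ?thesis by (simp add: cc_def take_update_cancel)
next
  case False
  have l: "i < length (take j a)" using False assms by simp
  have "cc (a[i := a!i - 1]) j = sum_list ((take j a)[i := a!i - 1])" by (simp add: cc_def take_update_swap)
  also have "\<dots> = sum_list (take j a) + (a!i - 1) - (take j a)!i" using l by (rule sum_list_update)
  also have "\<dots> = cc a j - 1" using False assms by (simp add: cc_def)
  finally show ?thesis using False by simp
qed

lemma nth_upd_len: "length (a[i := v]) = length a" by simp

lemma blk_upd: assumes i: "i < length a" "1 \<le> a!i" and x: "x \<in> blk a i" and j: "j < length a"
  shows "q \<in> blk (a[i := a!i - 1]) j \<longleftrightarrow> ush x q \<in> blk a j"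
proof -
  let ?a' = "a[i := a!i - 1]"
  have x1: "cc a i + 1 \<le> x" "x \<le> cc a i + a!i" using x i by (auto simp: blk_def' cc_Suc)
  have bj: "blk a j = {cc a j + 1 .. cc a j + a!j}" using j by (simp add: blk_def' cc_Suc)
  have bj': "blk ?a' j = {cc ?a' j + 1 .. cc ?a' j + ?a'!j}" using j by (simp add: blk_def' cc_Suc)
  consider "j < i" | "j = i" | "i < j" by linarith
  then show ?thesis
  proof cases
    case 1
    have "cc a (Suc j) \<le> cc a i" using 1 by (simp add: cc_mono)
    then have "cc a j + a!j \<le> cc a i" using j by (simp add: cc_Suc)
    moreover have "cc ?a' j = cc a j" "?a'!j = a!j" using 1 cc_upd[OF i, of j] by auto
    ultimately show ?thesis using bj bj' x1 by (auto simp: ush_def)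
  next
    case 2
    have "cc ?a' j = cc a j" "?a'!j = a!j - 1" using 2 i cc_upd[OF i, of j] by auto
    then show ?thesis using bj bj' x1 2 by (auto simp: ush_def)
  next
    case 3
    have "cc a (Suc i) \<le> cc a j" using 3 by (simp add: cc_mono)
    then have "cc a i + a!i \<le> cc a j" using i by (simp add: cc_Suc)
    moreover have "cc ?a' j = cc a j - 1" "?a'!j = a!j" using 3 cc_upd[OF i, of j] by auto
    ultimately show ?thesis using bj bj' x1 i by (auto simp: ush_def)
  qed
qed

lemma blk_img: assumes i: "i < length a" "1 \<le> a!i" and x: "x \<in> blk a i" and j: "j < length a"
  shows "ush x ` blk (a[i := a!i - 1]) j = blk a j - {x}"
proof
  show "ush x ` blk (a[i := a!i - 1]) j \<subseteq> blk a j - {x}" using blk_upd[OF assms] by auto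
next
  show "blk a j - {x} \<subseteq> ush x ` blk (a[i := a!i - 1]) j"
  proof
    fix v assume v: "v \<in> blk a j - {x}"
    then have "ush x (sh x v) = v" by (simp add: ush_sh)
    then have "sh x v \<in> blk (a[i := a!i - 1]) j" using blk_upd[OF assms, of "sh x v"] v by simp
    then show "v \<in> ush x ` blk (a[i := a!i - 1]) j" using \<open>ush x (sh x v) = v\<close> by force
  qed
qed

lemma sum_upd: fixes a :: "nat list" assumes "i < length a" "1 \<le> a!i" shows "sum_list (a[i := a!i - 1]) = sum_list a - 1"
proof -
  have "a!i \<le> sum_list a" using assms(1) elem_le_sum_list by auto
  then show ?thesis using sum_list_update[OF assms(1), of "a!i - 1"] assms by simp
qed

definition remP :: "nat \<Rightarrow> nat \<Rightarrow> nat \<Rightarrow> (nat \<Rightarrow> nat) \<Rightarrow> nat \<Rightarrow> nat" where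
  "remP n x f p q = (if q \<in> {1..n-1} then sh f (p (ush x q)) else q)"
definition insP :: "nat \<Rightarrow> nat \<Rightarrow> nat \<Rightarrow> (nat \<Rightarrow> nat) \<Rightarrow> nat \<Rightarrow> nat" where
  "insP n x f p' q = (if q = x then f else if q \<in> {1..n} then ush f (p' (sh x q)) else q)"

lemma ush_range: "x \<in> {1..n} \<Longrightarrow> q \<in> {1..n-1} \<Longrightarrow> ush x q \<in> {1..n}" by (auto simp: ush_def)
lemma sh_range: "x \<in> {1..n} \<Longrightarrow> q \<in> {1..n} \<Longrightarrow> q \<noteq> x \<Longrightarrow> sh x q \<in> {1..n-1}" by (auto simp: sh_def)

lemma remP_perm: assumes p: "p permutes {1..n}" and x: "x \<in> {1..n}" and f: "p x = f"
  shows "remP n x f p permutes {1..n-1}"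
proof (rule bij_imp_permutes)
  let ?S = "{1..n-1}"
  have ip: "inj p" using p by (simp add: permutes_inj)
  have "p x \<in> {1..n}" using permutes_in_image[OF p, of x] x by blast
  then have fn: "f \<in> {1..n}" using f by simp
  have into: "remP n x f p q \<in> ?S" if q: "q \<in> ?S" for q
  proof -
    have u: "ush x q \<in> {1..n}" using ush_range[OF x q] .
    have "p (ush x q) \<in> {1..n}" using permutes_in_image[OF p, of "ush x q"] u by blast
    moreover have "p (ush x q) \<noteq> f" using ip f by (metis injD ush_neq)
    ultimately have "sh f (p (ush x q)) \<in> ?S" using sh_range[OF fn] by blast
    then show ?thesis using q by (simp add: remP_def)
  qed
  have inj: "inj_on (remP n x f p) ?S"
  proof
    fix q1 q2 assume q: "q1 \<in> ?S" "q2 \<in> ?S" "remP n x f p q1 = remP n x f p q2"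
    have n1: "p (ush x q1) \<noteq> f" "p (ush x q2) \<noteq> f" using ip f by (metis injD ush_neq)+
    have "sh f (p (ush x q1)) = sh f (p (ush x q2))" using q by (simp add: remP_def)
    then have "p (ush x q1) = p (ush x q2)" using n1 sh_eq_iff by blast
    then have "ush x q1 = ush x q2" using ip by (simp add: inj_eq)
    then show "q1 = q2" by (simp add: ush_eq_iff)
  qed
  have "remP n x f p ` ?S \<subseteq> ?S" using into by blast
  then have "remP n x f p ` ?S = ?S" using endo_inj_surj[OF _ _ inj] by simp
  then show "bij_betw (remP n x f p) ?S ?S" using inj by (simp add: bij_betw_def)
next
  fix q assume "q \<notin> {1..n-1}" then show "remP n x f p q = q" unfolding remP_def by (simp only: if_False)
qed

lemma insP_perm: assumes p: "p' permutes {1..n-1}" and x: "x \<in> {1..n}" and f: "f \<in> {1..n}"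
  shows "insP n x f p' permutes {1..n}"
proof (rule bij_imp_permutes)
  let ?S = "{1..n}"
  have ip: "inj p'" using p by (simp add: permutes_inj)
  have into: "insP n x f p' q \<in> ?S" if q: "q \<in> ?S" for q
  proof (cases "q = x")
    case True then show ?thesis using f by (simp add: insP_def)
  next
    case False
    have "sh x q \<in> {1..n-1}" using sh_range[OF x q False] .
    then have "p' (sh x q) \<in> {1..n-1}" using permutes_in_image[OF p, of "sh x q"] by blast
    then have "ush f (p' (sh x q)) \<in> ?S" using ush_range[OF f] by blast
    then show ?thesis using False q by (simp add: insP_def)
  qed
  have inj: "inj_on (insP n x f p') ?S"
  proof
    fix q1 q2 assume q: "q1 \<in> ?S" "q2 \<in> ?S" "insP n x f p' q1 = insP n x f p' q2"
    show "q1 = q2"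
    proof (cases "q1 = x"; cases "q2 = x")
      assume "q1 \<noteq> x" "q2 \<noteq> x"
      then have "ush f (p' (sh x q1)) = ush f (p' (sh x q2))" using q by (simp add: insP_def)
      then have "sh x q1 = sh x q2" using ip by (simp add: ush_eq_iff inj_eq)
      then show "q1 = q2" using \<open>q1 \<noteq> x\<close> \<open>q2 \<noteq> x\<close> sh_eq_iff by blast
    qed (use q in \<open>auto simp: insP_def\<close>)
  qed
  have "insP n x f p' ` ?S \<subseteq> ?S" using into by blast
  then have "insP n x f p' ` ?S = ?S" using endo_inj_surj[OF _ _ inj] by simp
  then show "bij_betw (insP n x f p') ?S ?S" using inj by (simp add: bij_betw_def)
next
  fix q assume "q \<notin> {1..n}" then show "insP n x f p' q = q" using assms by (auto simp: insP_def)
qed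

lemma rt1: assumes p: "p' permutes {1..n-1}" and x: "x \<in> {1..n}"
  shows "remP n x f (insP n x f p') = p'"
proof
  fix q show "remP n x f (insP n x f p') q = p' q"
  proof (cases "q \<in> {1..n-1}")
    case True
    then have "ush x q \<in> {1..n}" using ush_range[OF x] by blast
    then show ?thesis using True by (simp add: remP_def insP_def)
  next
    case False then show ?thesis using p by (auto simp: remP_def permutes_not_in)
  qed
qed

lemma rt2: assumes p: "p permutes {1..n}" and x: "x \<in> {1..n}" and f: "p x = f"
  shows "insP n x f (remP n x f p) = p"
proof
  have ip: "inj p" using p by (simp add: permutes_inj)
  fix q show "insP n x f (remP n x f p) q = p q"
  proof (cases "q = x")
    case True then show ?thesis using f by (simp add: insP_def)
  next
    case False
    show ?thesis
    proof (cases "q \<in> {1..n}")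
      case True
      have s: "sh x q \<in> {1..n-1}" using sh_range[OF x True False] .
      have "ush x (sh x q) = q" using False by (simp add: ush_sh)
      moreover have "p q \<noteq> f" using f False ip by (metis injD)
      ultimately show ?thesis using True False s by (simp add: insP_def remP_def ush_sh)
    next
      case False2: False
      then show ?thesis using False p by (auto simp: insP_def permutes_not_in)
    qed
  qed
qed

lemma remP_img: assumes p: "p permutes {1..sum_list a}" and i: "i < length a" "1 \<le> a!i"
  and x: "x \<in> blk a i" and f: "p x = f" and j: "j < length a"
  shows "remP (sum_list a) x f p ` blk (a[i := a!i - 1]) j = sh f ` (p ` blk a j - {f})"
proof -
  let ?n = "sum_list a"
  have sub: "blk (a[i := a!i - 1]) j \<subseteq> {1..?n-1}"
    using blk_sub[of j "a[i := a!i - 1]"] j sum_upd[OF i] by simp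
  have ip: "inj p" using p by (simp add: permutes_inj)
  have "remP ?n x f p ` blk (a[i := a!i - 1]) j = (\<lambda>q. sh f (p (ush x q))) ` blk (a[i := a!i - 1]) j"
    using sub by (intro image_cong refl) (auto simp: remP_def)
  also have "\<dots> = sh f ` p ` ush x ` blk (a[i := a!i - 1]) j" by (simp add: image_image)
  also have "\<dots> = sh f ` p ` (blk a j - {x})" using blk_img[OF i x j] by simp
  also have "p ` (blk a j - {x}) = p ` blk a j - {f}" using ip f by (simp add: image_set_diff)
  finally show ?thesis .
qed



lemma isbad_unique: assumes "finite V" "isbad c V y1" "isbad c V y2" shows "y1 = y2"
proof (rule ccontr)
  assume ne: "y1 \<noteq> y2"
  have "y1 \<in> V" "y2 \<in> V" using assms by (auto simp: isbad_def)
  show False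
  proof (cases "y1 < y2")
    case True
    then have "cnt V y2 < cnt V y1" using cnt_strict[OF assms(1) \<open>y2 \<in> V\<close>] by simp
    then show False using assms(2,3) True by (auto simp: isbad_def)
  next
    case False
    then have "y2 < y1" using ne by simp
    then have "cnt V y1 < cnt V y2" using cnt_strict[OF assms(1) \<open>y1 \<in> V\<close>] by simp
    then show False using assms(2,3) \<open>y2 < y1\<close> by (auto simp: isbad_def)
  qed
qed

lemma cnt_sh: assumes "finite V" "y \<in> V" "y \<noteq> f"
  shows "cnt (sh f ` (V - {f})) (sh f y) = (if f \<in> V \<and> y < f then cnt V y - 1 else cnt V y)"
proof -
  have "{z \<in> sh f ` (V - {f}). sh f y < z} = sh f ` {z \<in> V - {f}. y < z}"
    using assms sh_less_iff by auto
  moreover have "inj_on (sh f) {z \<in> V - {f}. y < z}" by (auto simp: inj_on_def sh_eq_iff)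
  ultimately have "cnt (sh f ` (V - {f})) (sh f y) = card {z \<in> V - {f}. y < z}"
    by (simp add: cnt_def card_image)
  also have "{z \<in> V - {f}. y < z} = {z\<in>V. y < z} - {f}" by auto
  also have "card \<dots> = (if f \<in> V \<and> y < f then cnt V y - 1 else cnt V y)"
    using assms(1) by (auto simp: cnt_def card_Diff_singleton_if)
  finally show ?thesis .
qed

definition rel :: "nat \<Rightarrow> nat \<Rightarrow> nat set \<Rightarrow> nat set \<Rightarrow> nat \<Rightarrow> bool" where
  "rel c c' V W f \<longleftrightarrow> finite V \<and> W = sh f ` (V - {f}) \<and>
     ((f \<in> V \<and> isbad c V f \<and> c' = c) \<or> (f \<notin> V \<and> c + card V < f \<and> c' = c) \<or> (f \<notin> V \<and> 1 \<le> f \<and> f \<le> c \<and> c' = c - 1))"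

lemma rel_pos: assumes r: "rel c c' V W f" and y: "y \<in> V" "y \<noteq> f"
  shows "c + 1 + cnt V y \<noteq> f \<and> sh f (c + 1 + cnt V y) = c' + 1 + cnt W (sh f y)"
proof -
  have fin: "finite V" and W: "W = sh f ` (V - {f})" using r by (auto simp: rel_def)
  have cl: "cnt V y < card V" using cnt_le[OF fin y(1)] .
  have cW: "cnt W (sh f y) = (if f \<in> V \<and> y < f then cnt V y - 1 else cnt V y)"
    using cnt_sh[OF fin y] W by simp
  consider (A) "f \<in> V" "isbad c V f" "c' = c" | (B) "f \<notin> V" "c + card V < f" "c' = c"
    | (C) "f \<notin> V" "1 \<le> f" "f \<le> c" "c' = c - 1" using r by (auto simp: rel_def)
  then show ?thesis
  proof cases
    case A
    have ff: "f = c + 1 + cnt V f" using A by (simp add: isbad_def)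
    show ?thesis
    proof (cases "y < f")
      case True
      have "cnt V f < cnt V y" using cnt_strict[OF fin A(1) True] .
      then show ?thesis using ff True A cW by (simp add: sh_def)
    next
      case False
      then have "f < y" using y by simp
      then have "cnt V y < cnt V f" using cnt_strict[OF fin y(1)] by simp
      then show ?thesis using ff False A cW by (simp add: sh_def)
    qed
  next
    case B then show ?thesis using cl cW by (simp add: sh_def)
  next
    case C then show ?thesis using cl cW by (simp add: sh_def)
  qed
qed

lemma rel_R1: assumes r: "rel c c' V W f" and y: "y \<in> V" "y \<noteq> f"
  shows "isbad c' W (sh f y) \<longleftrightarrow> isbad c V y"
proof -
  have W: "W = sh f ` (V - {f})" using r by (simp add: rel_def)
  have inW: "sh f y \<in> W" using W y by auto
  have p: "c + 1 + cnt V y \<noteq> f" "sh f (c + 1 + cnt V y) = c' + 1 + cnt W (sh f y)"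
    using rel_pos[OF r y] by auto
  have "isbad c' W (sh f y) \<longleftrightarrow> sh f y = sh f (c + 1 + cnt V y)" using inW p(2) by (simp add: isbad_def)
  also have "\<dots> \<longleftrightarrow> y = c + 1 + cnt V y" using sh_eq_iff[OF y(2) p(1)] .
  also have "\<dots> \<longleftrightarrow> isbad c V y" using y by (simp add: isbad_def)
  finally show ?thesis .
qed

lemma rel_R2: assumes r: "rel c c' V W f" and f: "f \<notin> V"
  shows "(\<exists>y. isbad c V y) \<longleftrightarrow> (\<exists>w. isbad c' W w)"
proof
  assume "\<exists>y. isbad c V y"
  then obtain y where y: "isbad c V y" by blast
  then have "y \<in> V" "y \<noteq> f" using f by (auto simp: isbad_def)
  then show "\<exists>w. isbad c' W w" using rel_R1[OF r] y by blast
next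
  assume "\<exists>w. isbad c' W w"
  then obtain w where w: "isbad c' W w" by blast
  have W: "W = sh f ` (V - {f})" using r by (simp add: rel_def)
  then obtain y where y: "y \<in> V" "y \<noteq> f" "w = sh f y" using w by (auto simp: isbad_def)
  then show "\<exists>y. isbad c V y" using rel_R1[OF r y(1,2)] w by blast
qed

lemma rel_R3: assumes r: "rel c c' V W f" and f: "f \<in> V"
  shows "\<not> (\<exists>w. isbad c' W w)"
proof
  assume "\<exists>w. isbad c' W w"
  then obtain w where w: "isbad c' W w" by blast
  have W: "W = sh f ` (V - {f})" and fin: "finite V" using r by (auto simp: rel_def)
  have bf: "isbad c V f" using r f by (auto simp: rel_def)
  obtain y where y: "y \<in> V" "y \<noteq> f" "w = sh f y" using w W by (auto simp: isbad_def)
  have "isbad c V y" using rel_R1[OF r y(1,2)] w y by simp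
  then have "y = f" using isbad_unique[OF fin _ bf] by blast
  then show False using y by simp
qed

lemma rel_R4: assumes r: "rel c c' V W f" and f: "f \<in> V"
  shows "c + 1 + card {w\<in>W. c' + 1 + cnt W w < w} = f"
proof -
  have W: "W = sh f ` (V - {f})" and fin: "finite V" using r by (auto simp: rel_def)
  have bf: "isbad c V f" using r f by (auto simp: rel_def)
  have ff: "f = c + 1 + cnt V f" using bf by (simp add: isbad_def)
  have "{w\<in>W. c' + 1 + cnt W w < w} = sh f ` {y\<in>V. f < y}"
  proof
    show "{w\<in>W. c' + 1 + cnt W w < w} \<subseteq> sh f ` {y\<in>V. f < y}"
    proof
      fix w assume w: "w \<in> {w\<in>W. c' + 1 + cnt W w < w}"
      then obtain y where y: "y \<in> V" "y \<noteq> f" "w = sh f y" using W by auto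
      have p: "c + 1 + cnt V y \<noteq> f" "sh f (c + 1 + cnt V y) = c' + 1 + cnt W (sh f y)"
        using rel_pos[OF r y(1,2)] by auto
      have "c + 1 + cnt V y < y" using w y p sh_less_iff[OF p(1) y(2)] by simp
      moreover have "\<not> y < f"
      proof
        assume "y < f"
        then have "cnt V f < cnt V y" using cnt_strict[OF fin f] by simp
        then show False using \<open>c + 1 + cnt V y < y\<close> \<open>y < f\<close> ff by simp
      qed
      ultimately show "w \<in> sh f ` {y\<in>V. f < y}" using y by auto
    qed
  next
    show "sh f ` {y\<in>V. f < y} \<subseteq> {w\<in>W. c' + 1 + cnt W w < w}"
    proof
      fix w assume "w \<in> sh f ` {y\<in>V. f < y}"
      then obtain y where y: "y \<in> V" "f < y" "w = sh f y" by auto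
      then have yf: "y \<noteq> f" by simp
      have p: "c + 1 + cnt V y \<noteq> f" "sh f (c + 1 + cnt V y) = c' + 1 + cnt W (sh f y)"
        using rel_pos[OF r y(1) yf] by auto
      have "cnt V y < cnt V f" using cnt_strict[OF fin y(1) y(2)] .
      then have "c + 1 + cnt V y < y" using ff y(2) by simp
      then have "sh f (c + 1 + cnt V y) < sh f y" using sh_less_iff[OF p(1) yf] by simp
      then show "w \<in> {w\<in>W. c' + 1 + cnt W w < w}" using p y W yf by auto
    qed
  qed
  moreover have "inj_on (sh f) {y\<in>V. f < y}" by (auto simp: inj_on_def sh_eq_iff)
  ultimately have "card {w\<in>W. c' + 1 + cnt W w < w} = cnt V f" by (simp add: card_image cnt_def)
  then show ?thesis using ff by simp
qed

lemma S2: assumes fin: "finite V" and W: "W = sh F ` (V - {F})" and FV: "F \<in> V"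
  and good: "\<not> (\<exists>w. isbad c W w)" and Fd: "F = c + 1 + card {w\<in>W. c + 1 + cnt W w < w}"
  shows "isbad c V F"
proof -
  let ?P = "{w\<in>W. c + 1 + cnt W w < w}"
  let ?Q = "{w\<in>W. w < c + 1 + cnt W w}"
  have finW: "finite W" using W fin by simp
  have finP: "finite ?P" using finW by simp
  have finQ: "finite ?Q" using finW by simp
  have PQ: "w \<in> ?P \<or> w \<in> ?Q" if "w \<in> W" for w
    using good that by (auto simp: isbad_def)
  have eq: "{w\<in>W. F \<le> w} = ?P"
  proof
    show "{w\<in>W. F \<le> w} \<subseteq> ?P"
    proof
      fix w assume w: "w \<in> {w\<in>W. F \<le> w}"
      show "w \<in> ?P"
      proof (rule ccontr)
        assume "w \<notin> ?P"
        then have wQ: "w \<in> ?Q" using PQ w by blast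
        define M where "M = Max ?Q"
        have MQ: "M \<in> ?Q" using wQ finQ unfolding M_def by (intro Max_in) auto
        have wM: "w \<le> M" using wQ finQ unfolding M_def by simp
        have sub: "{z\<in>W. M < z} \<subseteq> ?P"
        proof
          fix z assume z: "z \<in> {z\<in>W. M < z}"
          have "z \<notin> ?Q"
          proof
            assume zQ: "z \<in> ?Q"
            have "z \<le> M" unfolding M_def by (rule Max_ge[OF finQ zQ])
            then show False using z by simp
          qed
          then show "z \<in> ?P" using PQ z by blast
        qed
        have "cnt W M \<le> card ?P" unfolding cnt_def[of W M] by (rule card_mono[OF finP sub])
        then show False using MQ wM w Fd by simp
      qed
    qed
  next
    show "?P \<subseteq> {w\<in>W. F \<le> w}"
    proof
      fix w assume wP: "w \<in> ?P"
      define m where "m = Min ?P"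
      have mP: "m \<in> ?P" using wP finP unfolding m_def by (intro Min_in) auto
      have mw: "m \<le> w" using wP finP unfolding m_def by simp
      have "?P - {m} \<subseteq> {z\<in>W. m < z}"
      proof
        fix z assume z: "z \<in> ?P - {m}"
        have "m \<le> z" using z finP unfolding m_def by simp
        then show "z \<in> {z\<in>W. m < z}" using z by auto
      qed
      then have "card (?P - {m}) \<le> cnt W m" unfolding cnt_def using finW by (intro card_mono) auto
      then have "card ?P \<le> cnt W m + 1" using mP finP by (simp add: card_Diff_singleton)
      then show "w \<in> {w\<in>W. F \<le> w}" using mP mw wP Fd by simp
    qed
  qed
  have "sh F ` {z\<in>V. F < z} = {w\<in>W. F \<le> w}"
  proof
    show "sh F ` {z\<in>V. F < z} \<subseteq> {w\<in>W. F \<le> w}" using W by (auto simp: sh_def)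
  next
    show "{w\<in>W. F \<le> w} \<subseteq> sh F ` {z\<in>V. F < z}"
    proof
      fix w assume w: "w \<in> {w\<in>W. F \<le> w}"
      then obtain z where z: "z \<in> V" "z \<noteq> F" "w = sh F z" using W by auto
      have "F < z" using z w by (auto simp: sh_def split: if_splits)
      then show "w \<in> sh F ` {z\<in>V. F < z}" using z by auto
    qed
  qed
  moreover have "inj_on (sh F) {z\<in>V. F < z}" by (auto simp: inj_on_def sh_eq_iff)
  ultimately have "cnt V F = card ?P" using eq by (metis (no_types, lifting) card_image cnt_def)
  then show ?thesis using FV Fd by (simp add: isbad_def)
qed



definition Tset :: "nat list \<Rightarrow> nat list \<Rightarrow> (nat \<Rightarrow> nat) set" where
  "Tset a e = {p. p permutes {1..sum_list a} \<and> (\<forall>j<length a. badb a p j \<longleftrightarrow> e!j = 1)}"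

definition Fv :: "nat list \<Rightarrow> nat \<Rightarrow> (nat \<Rightarrow> nat) \<Rightarrow> nat" where
  "Fv a i p' = cc a i + 1 + card {w \<in> p' ` blk (a[i := a!i - 1]) i.
      cc a i + 1 + cnt (p' ` blk (a[i := a!i - 1]) i) w < w}"

lemma relP:
  assumes i: "i < length a" "1 \<le> a!i" and p: "p permutes {1..sum_list a}"
    and x: "x \<in> blk a i" and f: "p x = f" and bad: "isbad (cc a i) (p ` blk a i) f"
    and j: "j < length a"
  shows "rel (cc a j) (cc (a[i := a!i - 1]) j) (p ` blk a j) (remP (sum_list a) x f p ` blk (a[i := a!i - 1]) j) f"
proof -
  let ?V = "\<lambda>j. p ` blk a j"
  have img: "remP (sum_list a) x f p ` blk (a[i := a!i - 1]) j = sh f ` (?V j - {f})"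
    by (rule remP_img[OF p i x f j])
  have fV: "f \<in> ?V i" using x f by auto
  have ff: "f = cc a i + 1 + cnt (?V i) f" using bad by (simp add: isbad_def)
  have cl: "cnt (?V i) f < a!i" using cnt_le[of "?V i" f] fV card_pblk[OF p i(1)] by simp
  have cs: "cc a (Suc i) = cc a i + a!i" using i by (simp add: cc_Suc)
  consider "j < i" | "j = i" | "i < j" by linarith
  then show ?thesis
  proof cases
    case 1
    have nf: "f \<notin> ?V j" using pblk_disj[OF p fV] 1 by blast
    have "cc a (Suc j) \<le> cc a i" using 1 by (simp add: cc_mono)
    then have "cc a j + card (?V j) < f" using ff card_pblk[OF p j] j by (simp add: cc_Suc)
    moreover have "cc (a[i := a!i - 1]) j = cc a j" using cc_upd[OF i, of j] 1 by simp
    ultimately show ?thesis using img nf by (simp add: rel_def)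
  next
    case 2
    have "cc (a[i := a!i - 1]) j = cc a j" using cc_upd[OF i, of j] 2 by simp
    then show ?thesis using img fV bad 2 by (simp add: rel_def)
  next
    case 3
    have nf: "f \<notin> ?V j" using pblk_disj[OF p fV] 3 by blast
    have "cc a (Suc i) \<le> cc a j" using 3 by (simp add: cc_mono)
    then have "f \<le> cc a j" using ff cl cs by simp
    moreover have "cc (a[i := a!i - 1]) j = cc a j - 1" using cc_upd[OF i, of j] 3 by simp
    moreover have "1 \<le> f" using ff by simp
    ultimately show ?thesis using img nf by (simp add: rel_def)
  qed
qed

lemma rem_props:
  assumes i: "i < length a" "1 \<le> a!i" and p: "p permutes {1..sum_list a}"
    and x: "x \<in> blk a i" and f: "p x = f" and bad: "isbad (cc a i) (p ` blk a i) f"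
  shows "\<And>j. j < length a \<Longrightarrow> j \<noteq> i \<Longrightarrow> badb (a[i := a!i - 1]) (remP (sum_list a) x f p) j \<longleftrightarrow> badb a p j"
    and "\<not> badb (a[i := a!i - 1]) (remP (sum_list a) x f p) i"
    and "Fv a i (remP (sum_list a) x f p) = f"
proof -
  have fV: "f \<in> p ` blk a i" using x f by auto
  {
    fix j assume j: "j < length a" "j \<noteq> i"
    have nf: "f \<notin> p ` blk a j" using pblk_disj[OF p fV] j by blast
    show "badb (a[i := a!i - 1]) (remP (sum_list a) x f p) j \<longleftrightarrow> badb a p j"
      using rel_R2[OF relP[OF i p x f bad j(1)] nf] by (simp add: badb_def)
  }
  show "\<not> badb (a[i := a!i - 1]) (remP (sum_list a) x f p) i"
    using rel_R3[OF relP[OF i p x f bad i(1)] fV] by (simp add: badb_def)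
  have "cc (a[i := a!i - 1]) i = cc a i" using cc_upd[OF i, of i] by simp
  then show "Fv a i (remP (sum_list a) x f p) = f"
    using rel_R4[OF relP[OF i p x f bad i(1)] fV] by (simp add: Fv_def)
qed

lemma ins_props:
  assumes i: "i < length a" "1 \<le> a!i" and p': "p' permutes {1..sum_list (a[i := a!i - 1])}"
    and good: "\<not> badb (a[i := a!i - 1]) p' i" and x: "x \<in> blk a i"
  shows "insP (sum_list a) x (Fv a i p') p' permutes {1..sum_list a}"
    and "insP (sum_list a) x (Fv a i p') p' x = Fv a i p'"
    and "remP (sum_list a) x (Fv a i p') (insP (sum_list a) x (Fv a i p') p') = p'"
    and "isbad (cc a i) (insP (sum_list a) x (Fv a i p') p' ` blk a i) (Fv a i p')"
proof -
  let ?a' = "a[i := a!i - 1]"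
  let ?n = "sum_list a"
  let ?f = "Fv a i p'"
  let ?p = "insP ?n x ?f p'"
  have n': "sum_list ?a' = ?n - 1" by (rule sum_upd[OF i])
  have p'n: "p' permutes {1..?n - 1}" using p' n' by simp
  have xn: "x \<in> {1..?n}" using blk_sub[OF i(1)] x by blast
  have ccs: "cc ?a' i = cc a i" using cc_upd[OF i, of i] by simp
  have i': "i < length ?a'" using i by simp
  have cW: "card (p' ` blk ?a' i) = a!i - 1" using card_pblk[OF p' i'] i by simp
  have "card {w \<in> p' ` blk ?a' i. cc a i + 1 + cnt (p' ` blk ?a' i) w < w} \<le> card (p' ` blk ?a' i)"
    by (rule card_mono) auto
  then have fle: "?f \<le> cc a i + a!i" using cW i unfolding Fv_def by simp
  have "cc a (Suc i) \<le> cc a (length a)" using i by (simp add: cc_mono)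
  then have "?f \<le> ?n" using fle i by (simp add: cc_Suc cc_ge)
  then have fn: "?f \<in> {1..?n}" by (simp add: Fv_def)
  show pp: "?p permutes {1..?n}" by (rule insP_perm[OF p'n xn fn])
  show px: "?p x = ?f" by (simp add: insP_def)
  show rt: "remP ?n x ?f ?p = p'" by (rule rt1[OF p'n xn])
  have img: "p' ` blk ?a' i = sh ?f ` (?p ` blk a i - {?f})"
    using remP_img[OF pp i x px i(1)] rt by simp
  show "isbad (cc a i) (?p ` blk a i) ?f"
  proof (rule S2[OF _ img])
    show "finite (?p ` blk a i)" by simp
    show "?f \<in> ?p ` blk a i" using x px by force
    show "\<not> (\<exists>w. isbad (cc a i) (p' ` blk ?a' i) w)" using good ccs by (simp add: badb_def)
    show "?f = cc a i + 1 + card {w \<in> p' ` blk ?a' i. cc a i + 1 + cnt (p' ` blk ?a' i) w < w}"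
      by (simp add: Fv_def)
  qed
qed



lemma permutes_fix_iff: assumes "S \<subseteq> A"
  shows "(p permutes A \<and> (\<forall>x\<in>S. p x = x)) \<longleftrightarrow> p permutes (A - S)"
  using assms unfolding permutes_def by blast

lemma count_fix: assumes "S \<subseteq> {1..m}"
  shows "card {p. p permutes {1..m} \<and> S \<subseteq> {i\<in>{1..m}. p i = i}} = fact (m - card S)"
proof -
  have "{p. p permutes {1..m} \<and> S \<subseteq> {i\<in>{1..m}. p i = i}} = {p. p permutes ({1..m} - S)}"
    using permutes_fix_iff[OF assms] assms by blast
  moreover have "card ({1..m} - S) = m - card S" using assms
    by (simp add: card_Diff_subset finite_subset)
  ultimately show ?thesis by (simp add: card_permutations)
qed

lemma card_filter_sum: "finite A \<Longrightarrow> card {x\<in>A. P x} = (\<Sum>x\<in>A. if P x then 1 else 0)"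
  by (simp add: sum.inter_filter[symmetric])

lemma sum_choose_fix:
  "(\<Sum>p\<in>{p. p permutes {1..m}}. card {i\<in>{1..m}. p i = i} choose j) = (m choose j) * fact (m - j)"
proof -
  let ?P = "{p. p permutes {1..m}}"
  let ?Sj = "{S. S \<subseteq> {1..m} \<and> card S = j}"
  have fP: "finite ?P" by (simp add: finite_permutations)
  have fS: "finite ?Sj" by (rule finite_subset[of _ "Pow {1..m}"]) auto
  have "(\<Sum>p\<in>?P. card {i\<in>{1..m}. p i = i} choose j)
      = (\<Sum>p\<in>?P. card {S. S \<subseteq> {i\<in>{1..m}. p i = i} \<and> card S = j})"
    by (intro sum.cong refl) (simp add: n_subsets)
  also have "\<dots> = (\<Sum>p\<in>?P. \<Sum>S\<in>?Sj. if S \<subseteq> {i\<in>{1..m}. p i = i} then 1 else (0::nat))"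
  proof (intro sum.cong refl)
    fix p
    have "{S. S \<subseteq> {i\<in>{1..m}. p i = i} \<and> card S = j} = {S\<in>?Sj. S \<subseteq> {i\<in>{1..m}. p i = i}}" by auto
    then show "card {S. S \<subseteq> {i\<in>{1..m}. p i = i} \<and> card S = j} = (\<Sum>S\<in>?Sj. if S \<subseteq> {i\<in>{1..m}. p i = i} then 1 else (0::nat))"
      using card_filter_sum[OF fS] by simp
  qed
  also have "\<dots> = (\<Sum>S\<in>?Sj. \<Sum>p\<in>?P. if S \<subseteq> {i\<in>{1..m}. p i = i} then 1 else (0::nat))"
    by (rule sum.swap)
  also have "\<dots> = (\<Sum>S\<in>?Sj. fact (m - j))"
  proof (intro sum.cong refl)
    fix S assume "S \<in> ?Sj"
    then have "card {p\<in>?P. S \<subseteq> {i\<in>{1..m}. p i = i}} = fact (m - j)" using count_fix[of S m] by simp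
    then show "(\<Sum>p\<in>?P. if S \<subseteq> {i\<in>{1..m}. p i = i} then 1 else (0::nat)) = fact (m - j)"
      using card_filter_sum[OF fP] by simp
  qed
  also have "\<dots> = (m choose j) * fact (m - j)" using n_subsets[of "{1..m}" j] by simp
  finally show ?thesis .
qed

lemma f_formula: "f_lam lam m = (\<Sum>j\<le>m. of_nat ((m choose j) * fact (m - j)) * (lam - 1) ^ j)"
proof -
  let ?P = "{p. p permutes {1..m}}"
  let ?F = "\<lambda>p. card {i\<in>{1..m}. p i = i}"
  have le: "\<And>p. ?F p \<le> m"
  proof -
    fix p have "?F p \<le> card {1..m}" by (rule card_mono) auto
    then show "?F p \<le> m" by simp
  qed
  have eq: "\<And>n. lam ^ n = (\<Sum>j\<le>n. of_nat (n choose j) * (lam - 1) ^ j)"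
    using binomial_ring[of "lam - 1" 1] by simp
  have "f_lam lam m = (\<Sum>p\<in>?P. \<Sum>j\<le>?F p. of_nat (?F p choose j) * (lam - 1) ^ j)"
    unfolding f_lam_def by (simp only: eq)
  also have "\<dots> = (\<Sum>p\<in>?P. \<Sum>j\<le>m. of_nat (?F p choose j) * (lam - 1) ^ j)"
  proof (rule sum.cong[OF refl])
    fix p
    show "(\<Sum>j\<le>?F p. of_nat (?F p choose j) * (lam - 1) ^ j) = (\<Sum>j\<le>m. of_nat (?F p choose j) * (lam - 1) ^ j)"
      using le[of p] by (intro sum.mono_neutral_left) auto
  qed
  also have "\<dots> = (\<Sum>j\<le>m. \<Sum>p\<in>?P. of_nat (?F p choose j) * (lam - 1) ^ j)" by (rule sum.swap)
  also have "\<dots> = (\<Sum>j\<le>m. of_nat (\<Sum>p\<in>?P. ?F p choose j) * (lam - 1) ^ j)"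
    by (simp add: sum_distrib_right)
  also have "\<dots> = (\<Sum>j\<le>m. of_nat ((m choose j) * fact (m - j)) * (lam - 1) ^ j)"
    by (simp only: sum_choose_fix)
  finally show ?thesis .
qed

lemma f_0: "f_lam lam 0 = 1" by (simp add: f_formula)

lemma coef_rec: assumes "j \<le> m" shows "(Suc m choose j) * fact (Suc m - j) = Suc m * ((m choose j) * fact (m - j))"
proof -
  have a: "fact j * fact (Suc m - j) * (Suc m choose j) = fact (Suc m)" using assms by (intro binomial_fact_lemma) simp
  have b: "fact j * fact (m - j) * (m choose j) = fact m" using assms by (intro binomial_fact_lemma) simp
  have "fact j * ((Suc m choose j) * fact (Suc m - j)) = fact j * (Suc m * ((m choose j) * fact (m - j)))"
    using a b by (simp add: algebra_simps)
  then show ?thesis by simp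
qed

lemma f_Suc: "f_lam lam (Suc m) = of_nat (Suc m) * f_lam lam m + (lam - 1) ^ Suc m"
proof -
  have "f_lam lam (Suc m) = (\<Sum>j\<le>m. of_nat ((Suc m choose j) * fact (Suc m - j)) * (lam - 1) ^ j) + (lam - 1) ^ Suc m"
    by (simp add: f_formula)
  also have "(\<Sum>j\<le>m. of_nat ((Suc m choose j) * fact (Suc m - j)) * (lam - 1) ^ j)
      = (\<Sum>j\<le>m. of_nat (Suc m) * (of_nat ((m choose j) * fact (m - j)) * (lam - 1) ^ j))"
  proof (intro sum.cong refl)
    fix j assume j: "j \<in> {..m}"
    have "of_nat ((Suc m choose j) * fact (Suc m - j)) = (of_nat (Suc m * ((m choose j) * fact (m - j))) :: complex)"
      using coef_rec[of j m] j by (metis atMost_iff)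
    then show "of_nat ((Suc m choose j) * fact (Suc m - j)) * (lam - 1) ^ j = of_nat (Suc m) * (of_nat ((m choose j) * fact (m - j)) * (lam - 1) ^ j)"
      by (simp only: of_nat_mult mult.assoc)
  qed
  also have "\<dots> = of_nat (Suc m) * f_lam lam m" by (simp add: f_formula sum_distrib_left)
  finally show ?thesis .
qed



definition Bs :: "nat list \<Rightarrow> nat list set" where
  "Bs a = {b. length b = length a \<and> (\<forall>i<length a. b!i \<le> a!i)}"

lemma Bs_Nil[simp]: "Bs [] = {[]}" by (auto simp: Bs_def)

lemma Bs_Cons: "Bs (x#a) = (\<lambda>(y,b). y#b) ` ({..x} \<times> Bs a)"
proof
  show "Bs (x#a) \<subseteq> (\<lambda>(y,b). y#b) ` ({..x} \<times> Bs a)"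
  proof
    fix c assume c: "c \<in> Bs (x#a)"
    then obtain y b where cb: "c = y#b" by (cases c) (auto simp: Bs_def)
    have "y \<le> x" using c cb by (auto simp: Bs_def)
    moreover have "b \<in> Bs a" using c cb by (fastforce simp: Bs_def)
    ultimately show "c \<in> (\<lambda>(y,b). y#b) ` ({..x} \<times> Bs a)" using cb by auto
  qed
next
  show "(\<lambda>(y,b). y#b) ` ({..x} \<times> Bs a) \<subseteq> Bs (x#a)"
    by (auto simp: Bs_def nth_Cons split: nat.split)
qed

lemma finite_Bs[simp]: "finite (Bs a)"
  by (induction a) (auto simp: Bs_Cons)

lemma sum_Bs_Cons: "(\<Sum>b\<in>Bs (x#a). F b) = (\<Sum>y\<le>x. \<Sum>b\<in>Bs a. F (y#b))"
proof -
  have inj: "inj_on (\<lambda>(y,b). y#b) ({..x} \<times> Bs a)" by (auto simp: inj_on_def)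
  have "(\<Sum>y\<le>x. \<Sum>b\<in>Bs a. F (y#b)) = (\<Sum>(y,b)\<in>{..x} \<times> Bs a. F (y#b))"
    by (rule sum.cartesian_product)
  also have "\<dots> = (\<Sum>b\<in>Bs (x#a). F b)"
    unfolding Bs_Cons by (subst sum.reindex[OF inj]) (auto intro!: sum.cong)
  finally show ?thesis by simp
qed

lemma prod_Cons_choose: "(\<Prod>i<length (x#a). (of_nat ((x#a)!i choose (y#b)!i) :: complex))
   = of_nat (x choose y) * (\<Prod>i<length a. of_nat (a!i choose b!i))"
  by (simp only: length_Cons prod.lessThan_Suc_shift nth_Cons_0 nth_Cons_Suc)

lemma pascal_sum: "(\<Sum>y\<le>Suc x. of_nat (Suc x choose y) * (P y :: complex))
   = (\<Sum>y\<le>x. of_nat (x choose y) * P y) + (\<Sum>y\<le>x. of_nat (x choose y) * P (Suc y))"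
proof -
  have "(\<Sum>y\<le>Suc x. of_nat (Suc x choose y) * P y) = P 0 + (\<Sum>y\<le>x. of_nat (Suc x choose Suc y) * P (Suc y))"
    by (subst sum.atMost_Suc_shift) (simp del: binomial_Suc_Suc)
  also have "\<dots> = P 0 + (\<Sum>y\<le>x. of_nat (x choose Suc y) * P (Suc y)) + (\<Sum>y\<le>x. of_nat (x choose y) * P (Suc y))"
  proof -
    have "\<And>y. of_nat (Suc x choose Suc y) * P (Suc y) = of_nat (x choose Suc y) * P (Suc y) + of_nat (x choose y) * P (Suc y)"
      by (simp add: algebra_simps)
    then show ?thesis by (simp only: sum.distrib add.assoc)
  qed
  also have "P 0 + (\<Sum>y\<le>x. of_nat (x choose Suc y) * P (Suc y)) = (\<Sum>y\<le>Suc x. of_nat (x choose y) * P y)"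
    by (subst sum.atMost_Suc_shift) simp
  also have "\<dots> = (\<Sum>y\<le>x. of_nat (x choose y) * P y)" by simp
  finally show ?thesis .
qed

lemma VD2: "(\<Sum>y\<le>x. of_nat (x choose y) * (\<Sum>j\<le>m. of_nat (m choose j) * (\<psi> (y + j) :: complex)))
   = (\<Sum>t\<le>x+m. of_nat (x+m choose t) * \<psi> t)"
proof (induction x arbitrary: \<psi>)
  case 0 then show ?case by simp
next
  case (Suc x)
  have "(\<Sum>y\<le>Suc x. of_nat (Suc x choose y) * (\<Sum>j\<le>m. of_nat (m choose j) * \<psi> (y + j)))
     = (\<Sum>y\<le>x. of_nat (x choose y) * (\<Sum>j\<le>m. of_nat (m choose j) * \<psi> (y + j)))
     + (\<Sum>y\<le>x. of_nat (x choose y) * (\<Sum>j\<le>m. of_nat (m choose j) * (\<lambda>t. \<psi> (Suc t)) (y + j)))"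
    by (subst pascal_sum) simp
  also have "\<dots> = (\<Sum>t\<le>x+m. of_nat (x+m choose t) * \<psi> t) + (\<Sum>t\<le>x+m. of_nat (x+m choose t) * \<psi> (Suc t))"
    using Suc.IH[of \<psi>] Suc.IH[of "\<lambda>t. \<psi> (Suc t)"] by simp
  also have "\<dots> = (\<Sum>t\<le>Suc (x+m). of_nat (Suc (x+m) choose t) * \<psi> t)"
    by (subst pascal_sum) simp
  finally show ?case by simp
qed

lemma VD: "(\<Sum>d\<in>Bs a. \<psi> (sum_list d) * (\<Prod>i<length a. of_nat (a!i choose d!i)))
   = (\<Sum>j\<le>sum_list a. of_nat (sum_list a choose j) * (\<psi> j :: complex))"
proof (induction a arbitrary: \<psi>)
  case Nil then show ?case by simp
next
  case (Cons x a)
  have "(\<Sum>d\<in>Bs (x#a). \<psi> (sum_list d) * (\<Prod>i<length (x#a). of_nat ((x#a)!i choose d!i)))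
     = (\<Sum>y\<le>x. \<Sum>d\<in>Bs a. \<psi> (y + sum_list d) * (of_nat (x choose y) * (\<Prod>i<length a. of_nat (a!i choose d!i))))"
    by (simp only: sum_Bs_Cons prod_Cons_choose sum_list.Cons)
  also have "\<dots> = (\<Sum>y\<le>x. of_nat (x choose y) * (\<Sum>d\<in>Bs a. \<psi> (y + sum_list d) * (\<Prod>i<length a. of_nat (a!i choose d!i))))"
    by (simp add: sum_distrib_left algebra_simps)
  also have "\<dots> = (\<Sum>y\<le>x. of_nat (x choose y) * (\<Sum>j\<le>sum_list a. of_nat (sum_list a choose j) * \<psi> (y + j)))"
  proof (rule sum.cong[OF refl])
    fix y
    show "of_nat (x choose y) * (\<Sum>d\<in>Bs a. \<psi> (y + sum_list d) * (\<Prod>i<length a. of_nat (a!i choose d!i)))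
      = of_nat (x choose y) * (\<Sum>j\<le>sum_list a. of_nat (sum_list a choose j) * \<psi> (y + j))"
      using Cons.IH[of "\<lambda>s. \<psi> (y + s)"] by simp
  qed
  also have "\<dots> = (\<Sum>t\<le>x + sum_list a. of_nat (x + sum_list a choose t) * \<psi> t)"
    by (rule VD2)
  finally show ?case by simp
qed



definition fQ :: "complex \<Rightarrow> nat list \<Rightarrow> (nat \<Rightarrow> complex) \<Rightarrow> complex" where
  "fQ lam a \<psi> = (\<Sum>b\<in>Bs a. (-1) ^ sum_list b * \<psi> (sum_list b) *
       (\<Prod>i<length a. of_nat (a ! i choose b ! i) * f_lam lam (b ! i)))"

lemma prod_Cons_cf: "(\<Prod>i<length (x#a). of_nat ((x#a)!i choose (y#b)!i) * f_lam lam ((y#b)!i))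
   = (of_nat (x choose y) * f_lam lam y) * (\<Prod>i<length a. of_nat (a!i choose b!i) * f_lam lam (b!i))"
  by (simp only: length_Cons prod.lessThan_Suc_shift nth_Cons_0 nth_Cons_Suc)

lemma fQ_Nil: "fQ lam [] \<psi> = \<psi> 0" by (simp add: fQ_def)

lemma fQ_Cons: "fQ lam (x#a) \<psi> = (\<Sum>y\<le>x. (-1)^y * of_nat (x choose y) * f_lam lam y * fQ lam a (\<lambda>s. \<psi> (y + s)))"
  unfolding fQ_def
  by (simp only: sum_Bs_Cons prod_Cons_cf sum_list.Cons power_add sum_distrib_left) (simp add: algebra_simps)

definition sub :: "nat list \<Rightarrow> nat list \<Rightarrow> nat list" where "sub a e = map2 (-) a e"
definition pw :: "nat list \<Rightarrow> nat list \<Rightarrow> nat" where "pw a e = (\<Prod>i<length a. a!i ^ e!i)"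

lemma sub_Cons[simp]: "sub (x#a) (y#e) = (x - y) # sub a e" by (simp add: sub_def)
lemma sub_Nil[simp]: "sub [] e = []" by (simp add: sub_def)
lemma pw_Cons: "pw (x#a) (y#e) = x^y * pw a e"
  unfolding pw_def by (simp only: length_Cons prod.lessThan_Suc_shift nth_Cons_0 nth_Cons_Suc)
lemma pw_Nil[simp]: "pw [] e = 1" by (simp add: pw_def)

lemma Astep:
  assumes IH: "\<And>\<phi>. (\<Sum>e\<in>Bs (replicate (length a) 1). of_nat (pw a e) * fQ lam (sub a e) (\<lambda>s. \<phi> (s + sum_list e)))
     = (\<Sum>d\<in>Bs a. (-(lam-1))^sum_list d * \<phi> (sum_list d) * (\<Prod>i<length a. of_nat (a!i choose d!i)))"
  shows "(\<Sum>e\<in>Bs (replicate (length a) 1). of_nat (c * pw a e) * fQ lam (z # sub a e) (\<lambda>s. \<phi> (s + (\<epsilon> + sum_list e))))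
    = of_nat c * (\<Sum>y\<le>z. (-1)^y * of_nat (z choose y) * f_lam lam y *
        (\<Sum>d\<in>Bs a. (-(lam-1))^sum_list d * \<phi> (y + \<epsilon> + sum_list d) * (\<Prod>i<length a. of_nat (a!i choose d!i))))"
proof -
  let ?R = "Bs (replicate (length a) 1)"
  have "(\<Sum>e\<in>?R. of_nat (c * pw a e) * fQ lam (z # sub a e) (\<lambda>s. \<phi> (s + (\<epsilon> + sum_list e))))
     = (\<Sum>e\<in>?R. \<Sum>y\<le>z. of_nat c * ((-1)^y * of_nat (z choose y) * f_lam lam y *
          (of_nat (pw a e) * fQ lam (sub a e) (\<lambda>s. \<phi> (y + s + (\<epsilon> + sum_list e))))))"
    by (simp add: fQ_Cons sum_distrib_left algebra_simps)
  also have "\<dots> = of_nat c * (\<Sum>y\<le>z. (-1)^y * of_nat (z choose y) * f_lam lam y *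
          (\<Sum>e\<in>?R. of_nat (pw a e) * fQ lam (sub a e) (\<lambda>s. \<phi> (y + s + (\<epsilon> + sum_list e)))))"
    by (subst sum.swap) (simp add: sum_distrib_left)
  also have "\<dots> = of_nat c * (\<Sum>y\<le>z. (-1)^y * of_nat (z choose y) * f_lam lam y *
        (\<Sum>d\<in>Bs a. (-(lam-1))^sum_list d * \<phi> (y + \<epsilon> + sum_list d) * (\<Prod>i<length a. of_nat (a!i choose d!i))))"
  proof -
    have "\<And>y. (\<Sum>e\<in>?R. of_nat (pw a e) * fQ lam (sub a e) (\<lambda>s. \<phi> (y + s + (\<epsilon> + sum_list e))))
       = (\<Sum>d\<in>Bs a. (-(lam-1))^sum_list d * \<phi> (y + \<epsilon> + sum_list d) * (\<Prod>i<length a. of_nat (a!i choose d!i)))"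
    proof -
      fix y
      have e1: "\<And>e. (\<lambda>s. \<phi> (y + s + (\<epsilon> + sum_list e))) = (\<lambda>s. (\<lambda>t. \<phi> (y + \<epsilon> + t)) (s + sum_list e))"
        by (simp add: ac_simps)
      show "?thesis y" unfolding e1 using IH[of "\<lambda>t. \<phi> (y + \<epsilon> + t)"] by simp
    qed
    then show ?thesis by simp
  qed
  finally show ?thesis .
qed

lemma ring_t:
  fixes A C s F M K s' C' :: complex
  assumes "s' * C' = s * C"
  shows "(-A) * C * (s * F + M) * K + s' * (A * C' * F * K) = (-A*M) * C * K"
proof -
  have "s' * (A*C'*F*K) = A*F*K*(s'*C')" by (simp only: mult_ac)
  also have "\<dots> = A*F*K*(s*C)" using assms by simp
  finally have e: "s' * (A*C'*F*K) = A*F*K*(s*C)" .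
  show ?thesis unfolding e by (simp add: algebra_simps)
qed

lemma SV: "(\<Sum>y\<le>x. (-1)^y * of_nat (x choose y) * f_lam lam y * K y)
   + of_nat x * (\<Sum>y\<le>x - 1. (-1)^y * of_nat ((x - 1) choose y) * f_lam lam y * K (y + 1))
   = (\<Sum>d\<le>x. (-(lam-1))^d * of_nat (x choose d) * (K d :: complex))"
proof (cases x)
  case 0 then show ?thesis by (simp add: f_0)
next
  case (Suc x')
  have t: "(-1)^(Suc y) * of_nat (Suc x' choose Suc y) * f_lam lam (Suc y) * K (Suc y)
      + of_nat (Suc x') * ((-1)^y * of_nat (x' choose y) * f_lam lam y * K (y + 1))
      = (-(lam-1))^(Suc y) * of_nat (Suc x' choose Suc y) * K (Suc y)" for y
  proof -
    have c: "of_nat (Suc x') * (of_nat (x' choose y) :: complex) = of_nat (Suc y) * of_nat (Suc x' choose Suc y)"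
      by (metis Suc_times_binomial of_nat_mult)
    have p1: "(-1::complex)^(Suc y) = - ((-1)^y)" by simp
    have p2: "(-(lam-1))^(Suc y) = - ((-1)^y) * (lam-1)^(Suc y)" by (subst power_minus) simp
    have r: "(- ((-1)^y)) * of_nat (Suc x' choose Suc y) * (of_nat (Suc y) * f_lam lam y + (lam - 1) ^ Suc y) * K (Suc y)
      + of_nat (Suc x') * ((-1)^y * of_nat (x' choose y) * f_lam lam y * K (Suc y))
      = (- ((-1)^y) * (lam-1)^(Suc y)) * of_nat (Suc x' choose Suc y) * K (Suc y)"
      by (rule ring_t[OF c])
    show ?thesis unfolding f_Suc p1 p2 Suc_eq_plus1[symmetric] using r .
  qed
  have "(\<Sum>y\<le>x. (-1)^y * of_nat (x choose y) * f_lam lam y * K y)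
     = K 0 + (\<Sum>y\<le>x'. (-1)^(Suc y) * of_nat (Suc x' choose Suc y) * f_lam lam (Suc y) * K (Suc y))"
    unfolding Suc by (subst sum.atMost_Suc_shift) (simp add: f_0 del: binomial_Suc_Suc)
  moreover have "(\<Sum>d\<le>x. (-(lam-1))^d * of_nat (x choose d) * K d)
     = K 0 + (\<Sum>y\<le>x'. (-(lam-1))^(Suc y) * of_nat (Suc x' choose Suc y) * K (Suc y))"
    unfolding Suc by (subst sum.atMost_Suc_shift) (simp del: binomial_Suc_Suc power_Suc)
  moreover have "of_nat x * (\<Sum>y\<le>x - 1. (-1)^y * of_nat ((x - 1) choose y) * f_lam lam y * K (y + 1))
     = (\<Sum>y\<le>x'. of_nat (Suc x') * ((-1)^y * of_nat (x' choose y) * f_lam lam y * K (y + 1)))"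
    unfolding Suc by (simp add: sum_distrib_left)
  ultimately show ?thesis using t by (simp add: sum.distrib[symmetric] del: binomial_Suc_Suc power_Suc)
qed



lemma Glemma: "(\<Sum>e\<in>Bs (replicate (length a) 1). of_nat (pw a e) * fQ lam (sub a e) (\<lambda>s. \<phi> (s + sum_list e)))
     = (\<Sum>d\<in>Bs a. (-(lam-1))^sum_list d * \<phi> (sum_list d) * (\<Prod>i<length a. of_nat (a!i choose d!i)))"
proof (induction a arbitrary: \<phi>)
  case Nil then show ?case by (simp add: fQ_Nil)
next
  case (Cons x a)
  let ?R = "Bs (replicate (length a) 1)"
  define K where "K t = (\<Sum>d\<in>Bs a. (-(lam-1))^sum_list d * \<phi> (t + sum_list d) * (\<Prod>i<length a. of_nat (a!i choose d!i)))" for t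
  have A: "(\<Sum>e\<in>?R. of_nat (x^\<epsilon> * pw a e) * fQ lam ((x - \<epsilon>) # sub a e) (\<lambda>s. \<phi> (s + (\<epsilon> + sum_list e))))
    = of_nat (x^\<epsilon>) * (\<Sum>y\<le>x - \<epsilon>. (-1)^y * of_nat ((x - \<epsilon>) choose y) * f_lam lam y * K (y + \<epsilon>))" for \<epsilon>
    unfolding K_def by (rule Astep[OF Cons.IH])
  have "(\<Sum>e\<in>Bs (replicate (length (x#a)) 1). of_nat (pw (x#a) e) * fQ lam (sub (x#a) e) (\<lambda>s. \<phi> (s + sum_list e)))
    = (\<Sum>\<epsilon>\<le>1. \<Sum>e\<in>?R. of_nat (x^\<epsilon> * pw a e) * fQ lam ((x - \<epsilon>) # sub a e) (\<lambda>s. \<phi> (s + (\<epsilon> + sum_list e))))"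
    by (simp add: sum_Bs_Cons pw_Cons)
  also have "\<dots> = (\<Sum>y\<le>x. (-1)^y * of_nat (x choose y) * f_lam lam y * K y)
     + of_nat x * (\<Sum>y\<le>x - 1. (-1)^y * of_nat ((x - 1) choose y) * f_lam lam y * K (y + 1))"
    using A[of 0] A[of 1] by simp
  also have "\<dots> = (\<Sum>d\<le>x. (-(lam-1))^d * of_nat (x choose d) * K d)"
    by (rule SV)
  also have "\<dots> = (\<Sum>d\<in>Bs (x#a). (-(lam-1))^sum_list d * \<phi> (sum_list d) * (\<Prod>i<length (x#a). of_nat ((x#a)!i choose d!i)))"
    unfolding K_def
    by (simp only: sum_Bs_Cons prod_Cons_choose sum_list.Cons power_add sum_distrib_left) (simp add: algebra_simps)
  finally show ?case .
qed

lemma hlemma: "(\<Sum>j\<le>n. of_nat (n choose j) * ((-(lam-1))^j * f_lam lam (n - j))) = fact n"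
proof (induction n)
  case 0 then show ?case by (simp add: f_0)
next
  case (Suc n)
  let ?m = "lam - 1"
  have fs: "f_lam lam (Suc n - j) = of_nat (Suc n - j) * f_lam lam (n - j) + ?m ^ (Suc n - j)" if "j \<le> Suc n" for j
  proof (cases "j = Suc n")
    case True then show ?thesis by (simp add: f_0)
  next
    case False
    then have "Suc n - j = Suc (n - j)" using that by simp
    then show ?thesis by (simp add: f_Suc)
  qed
  have "(\<Sum>j\<le>Suc n. of_nat (Suc n choose j) * ((-?m)^j * f_lam lam (Suc n - j)))
      = (\<Sum>j\<le>Suc n. of_nat (Suc n choose j) * (-?m)^j * ?m ^ (Suc n - j))
      + (\<Sum>j\<le>Suc n. of_nat ((Suc n - j) * (Suc n choose j)) * ((-?m)^j * f_lam lam (n - j)))"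
  proof -
    have "(\<Sum>j\<le>Suc n. of_nat (Suc n choose j) * ((-?m)^j * f_lam lam (Suc n - j)))
      = (\<Sum>j\<le>Suc n. of_nat (Suc n choose j) * (-?m)^j * ?m ^ (Suc n - j)
           + of_nat ((Suc n - j) * (Suc n choose j)) * ((-?m)^j * f_lam lam (n - j)))"
    proof (rule sum.cong[OF refl])
      fix j assume "j \<in> {..Suc n}"
      then have jl: "j \<le> Suc n" by simp
      show "of_nat (Suc n choose j) * ((-?m)^j * f_lam lam (Suc n - j))
        = of_nat (Suc n choose j) * (-?m)^j * ?m ^ (Suc n - j)
           + of_nat ((Suc n - j) * (Suc n choose j)) * ((-?m)^j * f_lam lam (n - j))"
        unfolding fs[OF jl] of_nat_mult by (simp add: algebra_simps)
    qed
    then show ?thesis by (simp only: sum.distrib)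
  qed
  also have "(\<Sum>j\<le>Suc n. of_nat (Suc n choose j) * (-?m)^j * ?m ^ (Suc n - j)) = (-?m + ?m)^(Suc n)"
    by (rule binomial_ring[symmetric])
  also have "(\<Sum>j\<le>Suc n. of_nat ((Suc n - j) * (Suc n choose j)) * ((-?m)^j * f_lam lam (n - j)))
      = (\<Sum>j\<le>Suc n. of_nat (Suc n) * (of_nat (n choose j) * ((-?m)^j * f_lam lam (n - j))))"
    by (intro sum.cong refl) (simp only: binomial_absorb_comp diff_Suc_1 of_nat_mult mult.assoc)
  also have "\<dots> = of_nat (Suc n) * (\<Sum>j\<le>n. of_nat (n choose j) * ((-?m)^j * f_lam lam (n - j)))"
    by (simp add: sum_distrib_left)
  finally show ?case using Suc.IH by simp
qed



lemma sum_list_sub: "length e = length a \<Longrightarrow> (\<forall>i<length a. e!i \<le> a!i) \<Longrightarrow>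
  sum_list (sub a e) + sum_list e = sum_list a"
proof (induction a arbitrary: e)
  case Nil then show ?case by simp
next
  case (Cons x a)
  then obtain y e' where e: "e = y # e'" by (cases e) auto
  have "y \<le> x" using Cons.prems e by auto
  moreover have "\<forall>i<length a. e'!i \<le> a!i" using Cons.prems e by auto
  ultimately show ?case using Cons.IH[of e'] Cons.prems e by simp
qed

lemma pw_nz: assumes "e \<in> Bs (replicate (length a) 1)" "pw a e \<noteq> 0"
  shows "\<forall>i<length a. e!i \<le> a!i"
proof (intro allI impI)
  fix i assume i: "i < length a"
  have "a!i ^ e!i \<noteq> 0" using assms(2) i unfolding pw_def by (auto simp: prod_zero_iff)
  moreover have "e!i \<le> 1" using assms(1) i by (auto simp: Bs_def)
  ultimately show "e!i \<le> a!i" by (cases "e!i") auto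
qed

lemma E_RHS: "(\<Sum>e\<in>Bs (replicate (length a) 1). of_nat (pw a e) *
     fQ lam (sub a e) (\<lambda>s. f_lam lam (sum_list (sub a e) - s))) = fact (sum_list a)"
proof -
  let ?n = "sum_list a"
  have "(\<Sum>e\<in>Bs (replicate (length a) 1). of_nat (pw a e) *
     fQ lam (sub a e) (\<lambda>s. f_lam lam (sum_list (sub a e) - s)))
    = (\<Sum>e\<in>Bs (replicate (length a) 1). of_nat (pw a e) *
     fQ lam (sub a e) (\<lambda>s. (\<lambda>t. f_lam lam (?n - t)) (s + sum_list e)))"
  proof (rule sum.cong[OF refl])
    fix e assume e: "e \<in> Bs (replicate (length a) 1)"
    show "of_nat (pw a e) * fQ lam (sub a e) (\<lambda>s. f_lam lam (sum_list (sub a e) - s))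
      = of_nat (pw a e) * fQ lam (sub a e) (\<lambda>s. (\<lambda>t. f_lam lam (?n - t)) (s + sum_list e))"
    proof (cases "pw a e = 0")
      case True then show ?thesis by simp
    next
      case False
      have "sum_list (sub a e) + sum_list e = ?n"
        using sum_list_sub[of e a] pw_nz[OF e False] e by (simp add: Bs_def)
      then have "\<And>s. sum_list (sub a e) - s = ?n - (s + sum_list e)" by simp
      then show ?thesis by simp
    qed
  qed
  also have "\<dots> = (\<Sum>d\<in>Bs a. (-(lam-1))^sum_list d * f_lam lam (?n - sum_list d) * (\<Prod>i<length a. of_nat (a!i choose d!i)))"
    by (rule Glemma)
  also have "\<dots> = (\<Sum>j\<le>?n. of_nat (?n choose j) * ((-(lam-1))^j * f_lam lam (?n - j)))"
    using VD[of "\<lambda>j. (-(lam-1))^j * f_lam lam (?n - j)" a] by simp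
  also have "\<dots> = fact ?n" by (rule hlemma)
  finally show ?thesis .
qed

lemma uniq:
  fixes X Y :: "nat list \<Rightarrow> complex"
  assumes hX: "\<And>a. (\<Sum>e\<in>Bs (replicate (length a) 1). of_nat (pw a e) * X (sub a e)) = fact (sum_list a)"
      and hY: "\<And>a. (\<Sum>e\<in>Bs (replicate (length a) 1). of_nat (pw a e) * Y (sub a e)) = fact (sum_list a)"
  shows "X a = Y a"
proof (induction "sum_list a" arbitrary: a rule: less_induct)
  case less
  let ?R = "Bs (replicate (length a) 1)"
  let ?Z = "replicate (length a) 0"
  have Z: "?Z \<in> ?R" by (auto simp: Bs_def)
  have pwZ: "pw a ?Z = 1" by (simp add: pw_def)
  have subZ: "sub a ?Z = a" by (simp add: sub_def list_eq_iff_nth_eq)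
  have rest: "(\<Sum>e\<in>?R - {?Z}. of_nat (pw a e) * X (sub a e)) = (\<Sum>e\<in>?R - {?Z}. of_nat (pw a e) * Y (sub a e))"
  proof (rule sum.cong[OF refl])
    fix e assume e: "e \<in> ?R - {?Z}"
    show "of_nat (pw a e) * X (sub a e) = of_nat (pw a e) * Y (sub a e)"
    proof (cases "pw a e = 0")
      case True then show ?thesis by simp
    next
      case False
      have le: "\<forall>i<length a. e!i \<le> a!i" using pw_nz[OF _ False] e by blast
      have len: "length e = length a" using e by (simp add: Bs_def)
      have s: "sum_list (sub a e) + sum_list e = sum_list a" using sum_list_sub[OF len le] .
      have nz: "sum_list e \<noteq> 0"
      proof
        assume "sum_list e = 0"
        then have "\<forall>x\<in>set e. x = 0" by simp
        then have "e = ?Z" using len by (simp add: list_eq_iff_nth_eq)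
        then show False using e by simp
      qed
      have "sum_list (sub a e) < sum_list a" using s nz by linarith
      then show ?thesis using less by simp
    qed
  qed
  have "(\<Sum>e\<in>?R. of_nat (pw a e) * X (sub a e)) = X a + (\<Sum>e\<in>?R - {?Z}. of_nat (pw a e) * X (sub a e))"
    using sum.remove[OF finite_Bs Z, of "\<lambda>e. of_nat (pw a e) * X (sub a e)"] pwZ subZ by simp
  moreover have "(\<Sum>e\<in>?R. of_nat (pw a e) * Y (sub a e)) = Y a + (\<Sum>e\<in>?R - {?Z}. of_nat (pw a e) * Y (sub a e))"
    using sum.remove[OF finite_Bs Z, of "\<lambda>e. of_nat (pw a e) * Y (sub a e)"] pwZ subZ by simp
  ultimately have "X a + (\<Sum>e\<in>?R - {?Z}. of_nat (pw a e) * Y (sub a e)) = Y a + (\<Sum>e\<in>?R - {?Z}. of_nat (pw a e) * Y (sub a e))"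
    using hX[of a] hY[of a] rest by simp
  then show ?case by simp
qed



lemma keyB:
  assumes i: "i < length a" "1 \<le> a!i"
    and e: "length e = length a" "\<forall>j<length a. e!j \<le> 1" "e!i = 1"
  shows "card (Tset a e) = a!i * card (Tset (a[i := a!i - 1]) (e[i := 0]))"
proof -
  let ?a' = "a[i := a!i - 1]"
  let ?e' = "e[i := 0]"
  let ?n = "sum_list a"
  let ?\<Psi> = "\<lambda>(x, p'). insP ?n x (Fv a i p') p'"
  let ?D = "blk a i \<times> Tset ?a' ?e'"
  have into: "insP ?n x (Fv a i p') p' \<in> Tset a e \<and> isbad (cc a i) (insP ?n x (Fv a i p') p' ` blk a i) (Fv a i p')
     \<and> insP ?n x (Fv a i p') p' x = Fv a i p' \<and> remP ?n x (Fv a i p') (insP ?n x (Fv a i p') p') = p'"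
    if xp: "(x, p') \<in> ?D" for x p'
  proof -
    have x: "x \<in> blk a i" and p'T: "p' \<in> Tset ?a' ?e'" using xp by auto
    have p': "p' permutes {1..sum_list ?a'}" using p'T by (simp add: Tset_def)
    have bad': "\<And>j. j < length a \<Longrightarrow> badb ?a' p' j \<longleftrightarrow> ?e'!j = 1" using p'T by (simp add: Tset_def)
    have good: "\<not> badb ?a' p' i" using bad'[OF i(1)] i e by simp
    let ?f = "Fv a i p'"
    let ?p = "insP ?n x ?f p'"
    have pp: "?p permutes {1..?n}" and px: "?p x = ?f" and rt: "remP ?n x ?f ?p = p'"
      and bad: "isbad (cc a i) (?p ` blk a i) ?f"
      using ins_props[OF i p' good x] by auto
    have "\<forall>j<length a. badb a ?p j \<longleftrightarrow> e!j = 1"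
    proof (intro allI impI)
      fix j assume j: "j < length a"
      show "badb a ?p j \<longleftrightarrow> e!j = 1"
      proof (cases "j = i")
        case True then show ?thesis using bad e by (auto simp: badb_def)
      next
        case False
        have "badb a ?p j \<longleftrightarrow> badb ?a' p' j" using rem_props(1)[OF i pp x px bad j False] rt by simp
        also have "\<dots> \<longleftrightarrow> e!j = 1" using bad'[OF j] False by simp
        finally show ?thesis .
      qed
    qed
    then show ?thesis using pp px rt bad by (simp add: Tset_def)
  qed
  have inj: "inj_on ?\<Psi> ?D"
  proof (rule inj_onI)
    fix u v assume u: "u \<in> ?D" and v: "v \<in> ?D" and eq: "?\<Psi> u = ?\<Psi> v"
    obtain x1 p1 where u': "u = (x1, p1)" by (cases u)
    obtain x2 p2 where v': "v = (x2, p2)" by (cases v)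
    let ?p = "insP ?n x1 (Fv a i p1) p1"
    have d1: "(x1, p1) \<in> ?D" using u u' by simp
    have d2: "(x2, p2) \<in> ?D" using v v' by simp
    have eq': "insP ?n x2 (Fv a i p2) p2 = ?p" using eq u' v' by simp
    have I1: "?p \<in> Tset a e" "isbad (cc a i) (?p ` blk a i) (Fv a i p1)" "?p x1 = Fv a i p1"
         "remP ?n x1 (Fv a i p1) ?p = p1" using into[OF d1] by auto
    have I2: "isbad (cc a i) (?p ` blk a i) (Fv a i p2)" "?p x2 = Fv a i p2"
         "remP ?n x2 (Fv a i p2) ?p = p2" using into[OF d2] unfolding eq' by auto
    have ff: "Fv a i p1 = Fv a i p2" using isbad_unique[OF _ I1(2) I2(1)] by simp
    have pp: "?p permutes {1..?n}" using I1(1) by (simp add: Tset_def)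
    have "?p x1 = ?p x2" using I1(3) I2(2) ff by simp
    then have "x1 = x2" using injD[OF permutes_inj[OF pp]] by blast
    moreover have "p1 = p2" using I1(4) I2(3) ff \<open>x1 = x2\<close> by simp
    ultimately show "u = v" using u' v' by simp
  qed
  have img: "?\<Psi> ` ?D = Tset a e"
  proof
    show "?\<Psi> ` ?D \<subseteq> Tset a e"
    proof
      fix y assume "y \<in> ?\<Psi> ` ?D"
      then obtain x p' where xp: "(x, p') \<in> ?D" "y = insP ?n x (Fv a i p') p'" by auto
      then show "y \<in> Tset a e" using into[OF xp(1)] by simp
    qed
  next
    show "Tset a e \<subseteq> ?\<Psi> ` ?D"
    proof
      fix p assume pT: "p \<in> Tset a e"
      have pp: "p permutes {1..?n}" using pT by (simp add: Tset_def)
      have bj: "\<And>j. j < length a \<Longrightarrow> badb a p j \<longleftrightarrow> e!j = 1" using pT by (simp add: Tset_def)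
      obtain f where bad: "isbad (cc a i) (p ` blk a i) f" using bj[OF i(1)] e by (auto simp: badb_def)
      then obtain x where x: "x \<in> blk a i" "p x = f" by (auto simp: isbad_def)
      let ?p' = "remP ?n x f p"
      have xn: "x \<in> {1..?n}" using blk_sub[OF i(1)] x by blast
      have p'p: "?p' permutes {1..sum_list ?a'}" using remP_perm[OF pp xn x(2)] sum_upd[OF i] by simp
      have "\<forall>j<length ?a'. badb ?a' ?p' j \<longleftrightarrow> ?e'!j = 1"
      proof (intro allI impI)
        fix j assume "j < length ?a'"
        then have j: "j < length a" by simp
        show "badb ?a' ?p' j \<longleftrightarrow> ?e'!j = 1"
        proof (cases "j = i")
          case True then show ?thesis using rem_props(2)[OF i pp x bad] e i(1) by simp
        next
          case False then show ?thesis using rem_props(1)[OF i pp x bad j False] bj[OF j] by simp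
        qed
      qed
      then have "?p' \<in> Tset ?a' ?e'" using p'p by (simp add: Tset_def)
      moreover have "Fv a i ?p' = f" using rem_props(3)[OF i pp x bad] .
      moreover have "insP ?n x f ?p' = p" using rt2[OF pp xn x(2)] .
      ultimately show "p \<in> ?\<Psi> ` ?D" using x by (intro image_eqI[of _ _ "(x, ?p')"]) auto
    qed
  qed
  have "card (Tset a e) = card ?D" using card_image[OF inj] img by simp
  also have "\<dots> = card (blk a i) * card (Tset ?a' ?e')" by (simp add: card_cartesian_product)
  finally show ?thesis using card_blk[OF i(1)] by simp
qed



definition Lc :: "nat list \<Rightarrow> nat" where
  "Lc a = card {p. p permutes {1..sum_list a} \<and> (\<forall>j<length a. \<not> badb a p j)}"

lemma pw_upd: assumes "i < length a" "length e = length a" "e!i = 1"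
  shows "pw a e = a!i * pw (a[i := a!i - 1]) (e[i := 0])"
proof -
  have fin: "finite {..<length a}" by simp
  have im: "i \<in> {..<length a}" using assms by simp
  have "pw a e = a!i ^ e!i * (\<Prod>j\<in>{..<length a} - {i}. a!j ^ e!j)"
    unfolding pw_def by (rule prod.remove[OF fin im])
  moreover have "pw (a[i := a!i - 1]) (e[i := 0]) = (a[i := a!i - 1])!i ^ (e[i := 0])!i
      * (\<Prod>j\<in>{..<length a} - {i}. (a[i := a!i - 1])!j ^ (e[i := 0])!j)"
    unfolding pw_def length_list_update by (rule prod.remove[OF fin im])
  moreover have "(\<Prod>j\<in>{..<length a} - {i}. (a[i := a!i - 1])!j ^ (e[i := 0])!j) = (\<Prod>j\<in>{..<length a} - {i}. a!j ^ e!j)"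
    by (rule prod.cong) auto
  ultimately show ?thesis using assms by simp
qed

lemma sub_upd: assumes "i < length a" "length e = length a" "e!i = 1"
  shows "sub (a[i := a!i - 1]) (e[i := 0]) = sub a e"
  using assms by (auto simp: sub_def list_eq_iff_nth_eq nth_list_update)

lemma countT: "length e = length a \<Longrightarrow> (\<forall>j<length a. e!j \<le> 1) \<Longrightarrow> card (Tset a e) = pw a e * Lc (sub a e)"
proof (induction "sum_list e" arbitrary: a e rule: less_induct)
  case less
  show ?case
  proof (cases "\<exists>i<length a. e!i = 1")
    case False
    then have z: "\<forall>j<length a. e!j = 0" using less.prems by (metis le_neq_implies_less less_one)
    have "pw a e = 1" using z by (simp add: pw_def)
    moreover have "sub a e = a" using z less.prems by (simp add: sub_def list_eq_iff_nth_eq)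
    moreover have "Tset a e = {p. p permutes {1..sum_list a} \<and> (\<forall>j<length a. \<not> badb a p j)}"
      using z by (auto simp: Tset_def)
    ultimately show ?thesis by (simp add: Lc_def)
  next
    case True
    then obtain i where i: "i < length a" "e!i = 1" by blast
    show ?thesis
    proof (cases "a!i = 0")
      case True
      have "blk a i = {}" using card_blk[OF i(1)] True by simp
      then have "Tset a e = {}" using i by (auto simp: Tset_def badb_def isbad_def)
      moreover have "pw a e = 0" using i True less.prems unfolding pw_def
        by (subst prod_zero_iff) auto
      ultimately show ?thesis by simp
    next
      case False
      then have ai: "1 \<le> a!i" by simp
      have k: "card (Tset a e) = a!i * card (Tset (a[i := a!i - 1]) (e[i := 0]))"
        by (rule keyB[OF i(1) ai less.prems i(2)])
      have "sum_list (e[i := 0]) < sum_list e"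
      proof -
        have "sum_list (e[i := 0]) = sum_list e + 0 - e!i" using i less.prems by (intro sum_list_update) simp
        moreover have "e!i \<le> sum_list e" using i less.prems elem_le_sum_list by (metis)
        ultimately show ?thesis using i by simp
      qed
      moreover have "length (e[i := 0]) = length (a[i := a!i - 1])" using less.prems by simp
      moreover have "\<forall>j<length (a[i := a!i - 1]). (e[i := 0])!j \<le> 1" using less.prems i(1)
        by (auto simp: nth_list_update)
      ultimately have ih: "card (Tset (a[i := a!i - 1]) (e[i := 0])) = pw (a[i := a!i - 1]) (e[i := 0]) * Lc (sub (a[i := a!i - 1]) (e[i := 0]))"
        using less.hyps by blast
      show ?thesis using k ih pw_upd[OF i(1) less.prems(1) i(2)] sub_upd[OF i(1) less.prems(1) i(2)] by simp
    qed
  qed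
qed

lemma partT: "fact (sum_list a) = (\<Sum>e\<in>Bs (replicate (length a) 1). card (Tset a e))"
proof -
  let ?R = "Bs (replicate (length a) 1)"
  have U: "{p. p permutes {1..sum_list a}} = (\<Union>e\<in>?R. Tset a e)"
  proof
    show "{p. p permutes {1..sum_list a}} \<subseteq> (\<Union>e\<in>?R. Tset a e)"
    proof
      fix p assume p: "p \<in> {p. p permutes {1..sum_list a}}"
      let ?e = "map (\<lambda>j. if badb a p j then 1 else 0) [0..<length a] :: nat list"
      have "?e \<in> ?R" by (auto simp: Bs_def)
      moreover have "p \<in> Tset a ?e" using p by (auto simp: Tset_def)
      ultimately show "p \<in> (\<Union>e\<in>?R. Tset a e)" by blast
    qed
  next
    show "(\<Union>e\<in>?R. Tset a e) \<subseteq> {p. p permutes {1..sum_list a}}" by (auto simp: Tset_def)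
  qed
  have fin: "\<forall>e\<in>?R. finite (Tset a e)"
    by (auto intro: finite_subset[OF _ finite_permutations[of "{1..sum_list a}"]] simp: Tset_def)
  have disj: "\<forall>e1\<in>?R. \<forall>e2\<in>?R. e1 \<noteq> e2 \<longrightarrow> Tset a e1 \<inter> Tset a e2 = {}"
  proof (intro ballI impI)
    fix e1 e2 assume e1: "e1 \<in> ?R" and e2: "e2 \<in> ?R" and ne: "e1 \<noteq> e2"
    show "Tset a e1 \<inter> Tset a e2 = {}"
    proof (rule ccontr)
      assume "Tset a e1 \<inter> Tset a e2 \<noteq> {}"
      then obtain p where "p \<in> Tset a e1" "p \<in> Tset a e2" by blast
      then have h: "\<forall>j<length a. e1!j = 1 \<longleftrightarrow> e2!j = 1" by (auto simp: Tset_def)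
      have "\<forall>j<length a. e1!j = e2!j"
      proof (intro allI impI)
        fix j assume j: "j < length a"
        have "e1!j \<le> 1" "e2!j \<le> 1" using e1 e2 j by (auto simp: Bs_def)
        then show "e1!j = e2!j" using h j by (metis le_neq_implies_less less_one)
      qed
      then have "e1 = e2" using e1 e2 by (auto simp: Bs_def list_eq_iff_nth_eq)
      then show False using ne by simp
    qed
  qed
  have "fact (sum_list a) = card {p. p permutes {1..sum_list a}}" by (simp add: card_permutations)
  also have "\<dots> = (\<Sum>e\<in>?R. card (Tset a e))" unfolding U by (rule card_UN_disjoint[OF finite_Bs fin disj])
  finally show ?thesis .
qed

lemma hX: "(\<Sum>e\<in>Bs (replicate (length a) 1). of_nat (pw a e) * (of_nat (Lc (sub a e)) :: complex)) = fact (sum_list a)"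
proof -
  have "fact (sum_list a) = (\<Sum>e\<in>Bs (replicate (length a) 1). pw a e * Lc (sub a e))"
    unfolding partT by (intro sum.cong refl countT) (auto simp: Bs_def)
  then have "(of_nat (fact (sum_list a)) :: complex) = of_nat (\<Sum>e\<in>Bs (replicate (length a) 1). pw a e * Lc (sub a e))"
    by simp
  then show ?thesis by simp
qed

theorem mainTheorem2:
  fixes a :: "nat list" and lam :: complex
  shows "of_nat (card {p. p permutes {1..sum_list a} \<and> Phi a p \<in> D_a a}) =
    (\<Sum>b\<in>{b. length b = length a \<and> (\<forall>i<length a. b ! i \<le> a ! i)}.
       (-1) ^ sum_list b * f_lam lam (sum_list a - sum_list b) *
       (\<Prod>i<length a. of_nat (a ! i choose b ! i) * f_lam lam (b ! i)))"
proof -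
  have L: "card {p. p permutes {1..sum_list a} \<and> Phi a p \<in> D_a a} = Lc a"
    unfolding Lc_def LHS_eq by (rule refl)
  have R: "(\<Sum>b\<in>{b. length b = length a \<and> (\<forall>i<length a. b ! i \<le> a ! i)}.
       (-1) ^ sum_list b * f_lam lam (sum_list a - sum_list b) *
       (\<Prod>i<length a. of_nat (a ! i choose b ! i) * f_lam lam (b ! i)))
     = fQ lam a (\<lambda>s. f_lam lam (sum_list a - s))"
    by (simp add: fQ_def Bs_def)
  have "(of_nat (Lc a) :: complex) = fQ lam a (\<lambda>s. f_lam lam (sum_list a - s))"
    by (rule uniq[of "\<lambda>a. of_nat (Lc a)" "\<lambda>a. fQ lam a (\<lambda>s. f_lam lam (sum_list a - s))", OF hX E_RHS])
  then show ?thesis using L R by simp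
qed


end
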